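(* Let $Q=[(n_1,q_1),\dots,(n_m,q_m)]$ be a compatible pointed irregular type with fission tree nodes as defined in the context, and let $\mathbb A^\flat$ be the set of admissible nodes of height $\le K$. Let $\mathcal R$ be the set of maps $c:\mathbb A^\flat\to\mathbb C$ such that (1) $c(v)\ne0$ for every mandatory node $v$; (2) $c(u)\ne c(w)$ for any two distinct admissible, non-mandatory nodes $u,w$ with the same parent; (3) $c(u)^N\ne c(w)^N$ for any two distinct mandatory nodes $u,w$ with the same parent $p$, where $N=N_p$. Then the map $\mathcal R\to\mathbb C^{ms}$, $c\mapsto\mathbf a(c)$, with $a_{i,j}(c)=c(\langle\tau_{j/r}(q_i)\rangle)$ if $j/r\in A(\mathrm{Levels}(q_i))$ and $a_{i,j}(c)=0$ otherwise, is a homeomorphism of $\mathcal R$ (with the topology from $\mathbb C^{\mathbb A^\flat}$) onto $\mathbf B(Q)$.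
   Context: Exponential factors: finite sums $q=\sum_ka_kx^k$, $a_k\in\mathbb C$, $k\in\mathbb Q_{>0}$; $\mathrm{slope}(q)$ = largest exponent with nonzero coefficient ($0$ if $q=0$); $\mathrm{ram}(q)$ = least $r\ge1$ with $q\in x^{1/r}\mathbb C[x^{1/r}]$. Galois operator $\sigma(\sum a_kx^k)=\sum a_ke^{-2\pi\sqrt{-1}k}x^k$; Stokes circle $\langle q\rangle=\{\sigma^i(q)\}$, $\mathrm{ram}\langle q\rangle:=\mathrm{ram}(q)$. Truncation $\tau_k(\sum a_{k'}x^{k'})=\sum_{k'\ge k}a_{k'}x^{k'}$. $\mathrm{Levels}(q)=\{\mathrm{slope}(q-\sigma^i(q)):i\in\mathbb Z\}\setminus\{0\}$. For $L=\{k_1>\dots>k_m\}$, $r_i$ = lcm of denominators of $k_1,\dots,k_i$, admissible exponents $A(L)=\mathbb N_{>0}\cup\bigcup_i\big((0,k_i]\cap\frac1{r_i}\mathbb N\big)$. Pointed irregular type $Q=[(n_1,q_1),\dots,(n_m,q_m)]$: $n_i\in\mathbb N_{>0}$, $q_i$ in pairwise distinct orbits; compatible if $\langle\tau_k(q_i)\rangle=\langle\tau_k(q_j)\rangle\Rightarrow\tau_k(q_i)=\tau_k(q_j)$ for all $k\in\mathbb Q_{>0}$, $i,j$. $Q'\sim Q$ means same length and multiplicities and $\mathrm{slope}(\sigma^k(q'_i)-\sigma^l(q'_j))=\mathrm{slope}(\sigma^k(q_i)-\sigma^l(q_j))$ for all $i,j$, $0\le k\le\mathrm{ram}(q_i)$,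 $0\le l\le\mathrm{ram}(q_j)$. Configuration space: $r=\mathrm{lcm}_i\mathrm{ram}(q_i)$, $K=\max_i\mathrm{slope}(q_i)$, $s=rK$, $Q_{\mathbf a}=[(n_i,\sum_{j=1}^sa_{i,j}x^{j/r})]$, $\mathbf B(Q)=\{\mathbf a\in\mathbb C^{ms}:Q_{\mathbf a}\sim Q\}$. Fission tree of compatible $Q$: let $A(Q)=\bigcup_iA(\mathrm{Levels}(q_i))$. For $k\in A(Q)$, the nodes of height $k$ are the Stokes circles $\langle\tau_k(q_i)\rangle$, $1\le i\le m$ (a set $\mathbb V_k$). If $k^-$ is the largest element of $A(Q)$ less than $k$, the parent of a node $\langle\tau_{k^-}(q_i)\rangle$ is $\langle\tau_k(q_i)\rangle$ (and the former is a child of the latter). A node $\langle\tau_k(q_i)\rangle$ is admissible if $k\in A(\mathrm{Levels}(q_i))$ and mandatory if $k\in\mathrm{Levels}(q_i)$. The ramification of a node $v=\langle\tau_k(q_i)\rangle$ is $\mathrm{Ram}(v)=\mathrm{ram}(\tau_k(q_i))$. For a node $v$ of height $k$ whose children have height $k^-$ with denominator $b$ (in lowest terms), $N_v=\mathrm{lcm}(\mathrm{Ram}(v),b)/\mathrm{Ram}(v)$. *)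

theory Defs
  imports "HOL-Analysis.Analysis"
begin

text \<open>An exponential factor sum a_k x^k is represented by its coefficient function
  rat => complex (coefficient of x^k). Well-formed: finite support of positive exponents.\<close>

type_synonym expfac = "rat \<Rightarrow> complex"

definition supp_ef :: "expfac \<Rightarrow> rat set" where
  "supp_ef q = {k. q k \<noteq> 0}"

definition is_expfac :: "expfac \<Rightarrow> bool" where
  "is_expfac q \<longleftrightarrow> finite (supp_ef q) \<and> (\<forall>k \<in> supp_ef q. k > 0)"

definition diff_ef :: "expfac \<Rightarrow> expfac \<Rightarrow> expfac" where
  "diff_ef q p = (\<lambda>k. q k - p k)"

definition slope :: "expfac \<Rightarrow> rat" where
  "slope q = (if supp_ef q = {} then 0 else Max (supp_ef q))"

definition ram :: "expfac \<Rightarrow> nat" where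
  "ram q = (LEAST r::nat. r \<ge> 1 \<and> (\<forall>k \<in> supp_ef q. of_nat r * k \<in> \<int>))"

text \<open>sigma^i for an integer i (closed form of the i-th iterate of the Galois operator).\<close>
definition sigma_pow :: "int \<Rightarrow> expfac \<Rightarrow> expfac" where
  "sigma_pow i q = (\<lambda>k. q k * exp (- 2 * of_real pi * \<i> * of_int i * of_rat k))"

definition sigma :: "expfac \<Rightarrow> expfac" where
  "sigma q = (\<lambda>k. q k * exp (- 2 * of_real pi * \<i> * of_rat k))"

definition stokes_circle :: "expfac \<Rightarrow> expfac set" where
  "stokes_circle q = {sigma_pow i q | i. True}"

definition trunc :: "rat \<Rightarrow> expfac \<Rightarrow> expfac" where
  "trunc k q = (\<lambda>k'. if k' \<ge> k then q k' else 0)"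

definition Levels :: "expfac \<Rightarrow> rat set" where
  "Levels q = {slope (diff_ef q (sigma_pow i q)) | i. True} - {0}"

definition denom :: "rat \<Rightarrow> int" where
  "denom k = snd (quotient_of k)"

definition level_ram :: "rat set \<Rightarrow> rat \<Rightarrow> int" where
  "level_ram L ki = Lcm (denom ` {l \<in> L. l \<ge> ki})"

definition admissible_exps :: "rat set \<Rightarrow> rat set" where
  "admissible_exps L =
     {k. \<exists>n::nat. n > 0 \<and> k = of_nat n}
     \<union> (\<Union>ki \<in> L. {k. 0 < k \<and> k \<le> ki \<and> (\<exists>n::nat. k = of_nat n / of_int (level_ram L ki))})"

text \<open>A pointed irregular type is a list of pairs (n_i, q_i); index i ranges over 0..<m.\<close>
type_synonym pit = "(nat \<times> expfac) list"

definition pointed_irregular_type :: "pit \<Rightarrow> bool" where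
  "pointed_irregular_type Q \<longleftrightarrow>
     (\<forall>i < length Q. fst (Q ! i) > 0 \<and> is_expfac (snd (Q ! i))) \<and>
     (\<forall>i < length Q. \<forall>j < length Q. i \<noteq> j \<longrightarrow>
        stokes_circle (snd (Q ! i)) \<noteq> stokes_circle (snd (Q ! j)))"

definition compatible :: "pit \<Rightarrow> bool" where
  "compatible Q \<longleftrightarrow>
     (\<forall>k::rat. k > 0 \<longrightarrow> (\<forall>i < length Q. \<forall>j < length Q.
        stokes_circle (trunc k (snd (Q ! i))) = stokes_circle (trunc k (snd (Q ! j)))
        \<longrightarrow> trunc k (snd (Q ! i)) = trunc k (snd (Q ! j))))"

definition pit_sim :: "pit \<Rightarrow> pit \<Rightarrow> bool" where
  "pit_sim Q' Q \<longleftrightarrow> length Q' = length Q \<and>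
     (\<forall>i < length Q. fst (Q' ! i) = fst (Q ! i)) \<and>
     (\<forall>i < length Q. \<forall>j < length Q. \<forall>k l :: nat.
        k \<le> ram (snd (Q ! i)) \<longrightarrow> l \<le> ram (snd (Q ! j)) \<longrightarrow>
        slope (diff_ef (sigma_pow (int k) (snd (Q' ! i))) (sigma_pow (int l) (snd (Q' ! j))))
        = slope (diff_ef (sigma_pow (int k) (snd (Q ! i))) (sigma_pow (int l) (snd (Q ! j)))))"

definition cfg_r :: "pit \<Rightarrow> nat" where
  "cfg_r Q = Lcm (set (map (\<lambda>p. ram (snd p)) Q))"

definition cfg_K :: "pit \<Rightarrow> rat" where
  "cfg_K Q = Max (set (map (\<lambda>p. slope (snd p)) Q))"

definition cfg_s :: "pit \<Rightarrow> nat" where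
  "cfg_s Q = nat \<lfloor>of_nat (cfg_r Q) * cfg_K Q\<rfloor>"

text \<open>Vectors a in C^{ms}: functions on pairs (i,j), i < m, 1 \<le> j \<le> s, extended by 0.\<close>
definition cfg_index :: "pit \<Rightarrow> (nat \<times> nat) set" where
  "cfg_index Q = {(i, j). i < length Q \<and> 1 \<le> j \<and> j \<le> cfg_s Q}"

definition Q_of :: "pit \<Rightarrow> (nat \<times> nat \<Rightarrow> complex) \<Rightarrow> pit" where
  "Q_of Q a = map (\<lambda>i. (fst (Q ! i),
       (\<lambda>k. \<Sum>j = 1..cfg_s Q. if k = of_nat j / of_nat (cfg_r Q) then a (i, j) else 0)))
     [0..<length Q]"

definition config_space :: "pit \<Rightarrow> (nat \<times> nat \<Rightarrow> complex) set" where
  "config_space Q = {a. (\<forall>x. x \<notin> cfg_index Q \<longrightarrow> a x = 0) \<and> pit_sim (Q_of Q a) Q}"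

definition AQ :: "pit \<Rightarrow> rat set" where
  "AQ Q = (\<Union>i < length Q. admissible_exps (Levels (snd (Q ! i))))"

text \<open>A node is a pair (height k, Stokes circle <tau_k(q_i)>).\<close>
type_synonym node = "rat \<times> expfac set"

definition tree_nodes :: "pit \<Rightarrow> node set" where
  "tree_nodes Q = {(k, stokes_circle (trunc k (snd (Q ! i)))) | k i. k \<in> AQ Q \<and> i < length Q}"

definition admissible_node :: "pit \<Rightarrow> node \<Rightarrow> bool" where
  "admissible_node Q v \<longleftrightarrow> (\<exists>i < length Q.
     snd v = stokes_circle (trunc (fst v) (snd (Q ! i))) \<and>
     fst v \<in> admissible_exps (Levels (snd (Q ! i))))"

definition mandatory_node :: "pit \<Rightarrow> node \<Rightarrow> bool" where
  "mandatory_node Q v \<longleftrightarrow> (\<exists>i < length Q.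
     snd v = stokes_circle (trunc (fst v) (snd (Q ! i))) \<and>
     fst v \<in> Levels (snd (Q ! i)))"

definition is_parent :: "pit \<Rightarrow> node \<Rightarrow> node \<Rightarrow> bool" where
  "is_parent Q v p \<longleftrightarrow> (\<exists>i < length Q. \<exists>k k'.
     k \<in> AQ Q \<and> k' \<in> AQ Q \<and> k < k' \<and> (\<forall>k'' \<in> AQ Q. \<not> (k < k'' \<and> k'' < k')) \<and>
     v = (k, stokes_circle (trunc k (snd (Q ! i)))) \<and>
     p = (k', stokes_circle (trunc k' (snd (Q ! i)))))"

definition node_Ram :: "node \<Rightarrow> nat" where
  "node_Ram v = ram (SOME q. q \<in> snd v)"

definition children_height :: "pit \<Rightarrow> node \<Rightarrow> rat" where
  "children_height Q v = (GREATEST k. k \<in> AQ Q \<and> k < fst v)"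

definition node_N :: "pit \<Rightarrow> node \<Rightarrow> nat" where
  "node_N Q v = nat (lcm (int (node_Ram v)) (denom (children_height Q v)) div int (node_Ram v))"

definition A_flat :: "pit \<Rightarrow> node set" where
  "A_flat Q = {v. admissible_node Q v \<and> fst v \<le> cfg_K Q}"

text \<open>Maps A_flat -> C are represented as functions on all nodes vanishing outside A_flat.\<close>
definition R_space :: "pit \<Rightarrow> (node \<Rightarrow> complex) set" where
  "R_space Q = {c. (\<forall>v. v \<notin> A_flat Q \<longrightarrow> c v = 0) \<and>
     (\<forall>v \<in> A_flat Q. mandatory_node Q v \<longrightarrow> c v \<noteq> 0) \<and>
     (\<forall>u \<in> A_flat Q. \<forall>w \<in> A_flat Q. \<forall>p. u \<noteq> w \<and>
        \<not> mandatory_node Q u \<and> \<not> mandatory_node Q w \<and>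
        is_parent Q u p \<and> is_parent Q w p \<longrightarrow> c u \<noteq> c w) \<and>
     (\<forall>u \<in> A_flat Q. \<forall>w \<in> A_flat Q. \<forall>p. u \<noteq> w \<and>
        mandatory_node Q u \<and> mandatory_node Q w \<and>
        is_parent Q u p \<and> is_parent Q w p \<longrightarrow> c u ^ node_N Q p \<noteq> c w ^ node_N Q p)}"

definition coeff_map :: "pit \<Rightarrow> (node \<Rightarrow> complex) \<Rightarrow> (nat \<times> nat \<Rightarrow> complex)" where
  "coeff_map Q c = (\<lambda>(i, j).
     if (i, j) \<in> cfg_index Q \<and>
        of_nat j / of_nat (cfg_r Q) \<in> admissible_exps (Levels (snd (Q ! i)))
     then c (of_nat j / of_nat (cfg_r Q),
             stokes_circle (trunc (of_nat j / of_nat (cfg_r Q)) (snd (Q ! i))))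
     else 0)"

end

theory Submission
  imports Defs
begin


definition zeta :: "rat \<Rightarrow> complex" where
  "zeta t = exp (- 2 * of_real pi * \<i> * of_rat t)"

lemma zeta_add: "zeta (a + b) = zeta a * zeta b"
  unfolding zeta_def by (simp add: of_rat_add distrib_left exp_add[symmetric] algebra_simps)

lemma zeta_nonzero[simp]: "zeta t \<noteq> 0"
  unfolding zeta_def by simp

lemma of_rat_complex: "(of_rat t :: complex) = of_real (of_rat t)"
  by (cases t) (simp add: of_rat_rat)

lemma zeta_eq_1: "zeta t = 1 \<longleftrightarrow> t \<in> \<int>"
proof -
  have "zeta t = 1 \<longleftrightarrow> (\<exists>n::int. - (2 * pi * of_rat t) = real_of_int (2 * n) * pi)"
    unfolding zeta_def exp_eq_1 by (simp add: of_rat_complex)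
  also have "\<dots> \<longleftrightarrow> (\<exists>n::int. (of_rat t :: real) = of_int (- n))"
  proof (intro ex_cong1)
    fix n :: int
    have "- (2 * pi * of_rat t) = real_of_int (2 * n) * pi \<longleftrightarrow> pi * (of_rat t + of_int n) = pi * 0"
      by (simp add: algebra_simps; linarith)
    also have "\<dots> \<longleftrightarrow> of_rat t + of_int n = (0::real)" using pi_neq_zero by simp
    finally show "- (2 * pi * of_rat t) = real_of_int (2 * n) * pi \<longleftrightarrow> (of_rat t :: real) = of_int (- n)"
      by linarith
  qed
  also have "\<dots> \<longleftrightarrow> (\<exists>n::int. t = of_int (- n))"
    by (metis of_rat_eq_iff of_rat_of_int_eq)
  also have "\<dots> \<longleftrightarrow> t \<in> \<int>"
    by (metis Ints_cases Ints_of_int minus_minus)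
  finally show ?thesis .
qed

lemma zeta_eq_iff: "zeta a = zeta b \<longleftrightarrow> a - b \<in> \<int>"
proof -
  have "zeta a = zeta (a - b) * zeta b" by (simp add: zeta_add[symmetric])
  then show ?thesis by (metis zeta_eq_1 mult_cancel_right mult_1 zeta_nonzero)
qed

lemma zeta_int[simp]: "t \<in> \<int> \<Longrightarrow> zeta t = 1" by (simp add: zeta_eq_1)

lemma zeta_power: "zeta t ^ N = zeta (of_nat N * t)"
proof (induction N)
  case 0 then show ?case by (simp add: zeta_def)
next
  case (Suc N)
  have "zeta (of_nat (Suc N) * t) = zeta t * zeta (of_nat N * t)"
    by (simp add: zeta_add[symmetric] algebra_simps)
  then show ?case using Suc by simp
qed

lemma sigma_pow_apply: "sigma_pow n q k = q k * zeta (of_int n * k)"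
  unfolding sigma_pow_def zeta_def by (simp add: of_rat_mult algebra_simps)

lemma rat_div_Ints: "b \<noteq> 0 \<Longrightarrow> (of_int p / of_int b :: rat) \<in> \<int> \<longleftrightarrow> b dvd p"
proof
  assume b: "b \<noteq> 0" and "(of_int p / of_int b :: rat) \<in> \<int>"
  then obtain z where "(of_int p / of_int b :: rat) = of_int z" by (auto elim: Ints_cases)
  then have "(of_int p :: rat) = of_int (z * b)" using b by (simp add: field_simps)
  then show "b dvd p" by (metis dvd_triv_right of_int_eq_iff)
next
  assume b: "b \<noteq> 0" and "b dvd p"
  then obtain c where "p = b * c" by auto
  then show "(of_int p / of_int b :: rat) \<in> \<int>" using b by simp
qed

lemma denom_pos: "denom x > 0"
  unfolding denom_def by (rule quotient_of_denom_pos')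

lemma int_mult_Ints_iff: "of_int n * x \<in> \<int> \<longleftrightarrow> denom x dvd n"
proof -
  obtain a b where q: "quotient_of x = (a, b)" by (cases "quotient_of x")
  have b: "b > 0" using q by (rule quotient_of_denom_pos)
  have x: "x = of_int a / of_int b" using q by (simp add: quotient_of_div)
  have cop: "coprime a b" using q by (rule quotient_of_coprime)
  have e: "of_int n * x = of_int (n * a) / of_int b" using x by simp
  have "of_int n * x \<in> \<int> \<longleftrightarrow> b dvd n * a" unfolding e using b rat_div_Ints[of b "n*a"] by simp
  also have "\<dots> \<longleftrightarrow> b dvd n" using cop
    by (metis coprime_commute coprime_dvd_mult_left_iff)
  finally show ?thesis using q by (simp add: denom_def)
qed

lemma denom_mult_Ints: "of_int (denom x) * x \<in> \<int>"
  by (simp add: int_mult_Ints_iff)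

section \<open>Basic expfac facts\<close>

lemma supp_ef_iff: "k \<in> supp_ef q \<longleftrightarrow> q k \<noteq> 0" by (simp add: supp_ef_def)

lemma is_expfacD: "is_expfac q \<Longrightarrow> q k \<noteq> 0 \<Longrightarrow> k > 0"
  by (auto simp: is_expfac_def supp_ef_def)

lemma is_expfac_finite: "is_expfac q \<Longrightarrow> finite {k. q k \<noteq> 0}"
  by (auto simp: is_expfac_def supp_ef_def)

lemma supp_sigma_pow[simp]: "supp_ef (sigma_pow n q) = supp_ef q"
  by (auto simp: supp_ef_def sigma_pow_apply)

lemma is_expfac_sigma[simp]: "is_expfac (sigma_pow n q) = is_expfac q"
  by (simp add: is_expfac_def)

lemma is_expfac_diff: "is_expfac f \<Longrightarrow> is_expfac g \<Longrightarrow> is_expfac (diff_ef f g)"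
proof -
  assume f: "is_expfac f" and g: "is_expfac g"
  have "supp_ef (diff_ef f g) \<subseteq> supp_ef f \<union> supp_ef g"
    by (auto simp: supp_ef_def diff_ef_def)
  then show ?thesis using f g unfolding is_expfac_def by (meson Un_iff finite_Un finite_subset subsetD)
qed

lemma is_expfac_trunc: "is_expfac q \<Longrightarrow> is_expfac (trunc e q)"
proof -
  assume f: "is_expfac q"
  have "supp_ef (trunc e q) \<subseteq> supp_ef q"
    by (auto simp: supp_ef_def trunc_def)
  then show ?thesis using f unfolding is_expfac_def by (meson finite_subset subsetD)
qed

lemma slope_eq_iff:
  assumes "is_expfac d"
  shows "slope d = h \<longleftrightarrow> (h = 0 \<and> (\<forall>k. d k = 0)) \<or> (0 < h \<and> d h \<noteq> 0 \<and> (\<forall>k>h. d k = 0))"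
proof (cases "supp_ef d = {}")
  case True
  then have "\<forall>k. d k = 0" by (auto simp: supp_ef_def)
  then show ?thesis using True by (auto simp: slope_def)
next
  case False
  let ?M = "Max (supp_ef d)"
  have fin: "finite (supp_ef d)" using assms by (simp add: is_expfac_def)
  have M: "?M \<in> supp_ef d" using fin False by simp
  have Mpos: "?M > 0" using M assms by (auto simp: is_expfac_def)
  have dM: "d ?M \<noteq> 0" using M by (simp add: supp_ef_def)
  have above: "\<forall>k>?M. d k = 0"
  proof (intro allI impI)
    fix k assume k: "k > ?M"
    show "d k = 0"
    proof (rule ccontr)
      assume "d k \<noteq> 0"
      then have "k \<in> supp_ef d" by (simp add: supp_ef_def)
      then have "k \<le> ?M" using fin by simp
      then show False using k by simp
    qed
  qed
  have sl: "slope d = ?M" using False by (simp add: slope_def)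
  show ?thesis
  proof
    assume "slope d = h" then show "(h = 0 \<and> (\<forall>k. d k = 0)) \<or> (0 < h \<and> d h \<noteq> 0 \<and> (\<forall>k>h. d k = 0))"
      using sl Mpos dM above by auto
  next
    assume H: "(h = 0 \<and> (\<forall>k. d k = 0)) \<or> (0 < h \<and> d h \<noteq> 0 \<and> (\<forall>k>h. d k = 0))"
    then have h: "0 < h" "d h \<noteq> 0" "\<forall>k>h. d k = 0" using dM by auto
    have "h \<le> ?M" using h(2) fin by (simp add: supp_ef_def)
    moreover have "\<not> h < ?M" using h(3) dM by auto
    ultimately show "slope d = h" using sl by simp
  qed
qed

lemma slope_diff_iff:
  assumes "is_expfac f" "is_expfac g"
  shows "slope (diff_ef f g) = h \<longleftrightarrow> 0 \<le> h \<and> (\<forall>k>h. f k = g k) \<and> (0 < h \<longrightarrow> f h \<noteq> g h)"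
proof -
  have d: "is_expfac (diff_ef f g)" using assms by (rule is_expfac_diff)
  have pos: "\<And>k. f k \<noteq> g k \<Longrightarrow> k > 0"
    using is_expfacD[OF d] by (simp add: diff_ef_def)
  show ?thesis unfolding slope_eq_iff[OF d]
  proof
    assume "(h = 0 \<and> (\<forall>k. diff_ef f g k = 0)) \<or> (0 < h \<and> diff_ef f g h \<noteq> 0 \<and> (\<forall>k>h. diff_ef f g k = 0))"
    then show "0 \<le> h \<and> (\<forall>k>h. f k = g k) \<and> (0 < h \<longrightarrow> f h \<noteq> g h)"
      by (auto simp: diff_ef_def)
  next
    assume H: "0 \<le> h \<and> (\<forall>k>h. f k = g k) \<and> (0 < h \<longrightarrow> f h \<noteq> g h)"
    show "(h = 0 \<and> (\<forall>k. diff_ef f g k = 0)) \<or> (0 < h \<and> diff_ef f g h \<noteq> 0 \<and> (\<forall>k>h. diff_ef f g k = 0))"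
    proof (cases "h = 0")
      case True
      have "\<forall>k. diff_ef f g k = 0"
      proof
        fix k show "diff_ef f g k = 0"
        proof (rule ccontr)
          assume "diff_ef f g k \<noteq> 0"
          then have "f k \<noteq> g k" by (simp add: diff_ef_def)
          then have "k > 0" by (rule pos)
          then show False using H True \<open>f k \<noteq> g k\<close> by auto
        qed
      qed
      then show ?thesis using True by simp
    next
      case False
      then show ?thesis using H by (auto simp: diff_ef_def)
    qed
  qed
qed

lemma sigma_pow_add: "sigma_pow a (sigma_pow b q) = sigma_pow (a + b) q"
  by (rule ext) (simp add: sigma_pow_apply zeta_add[symmetric] algebra_simps)

lemma sigma_pow_0[simp]: "sigma_pow 0 q = q"
  by (rule ext) (simp add: sigma_pow_apply zeta_def)

lemma sigma_pow_eq_self: "sigma_pow n q k = q k \<longleftrightarrow> q k = 0 \<or> of_int n * k \<in> \<int>"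
  by (auto simp: sigma_pow_apply zeta_eq_1[symmetric])

lemma trunc_sigma: "trunc e (sigma_pow n q) = sigma_pow n (trunc e q)"
  by (rule ext) (simp add: trunc_def sigma_pow_apply)

lemma trunc_eq_iff: "trunc e f = trunc e g \<longleftrightarrow> (\<forall>x\<ge>e. f x = g x)"
proof
  assume "trunc e f = trunc e g"
  then show "\<forall>x\<ge>e. f x = g x" unfolding trunc_def fun_eq_iff by (metis (mono_tags))
next
  assume "\<forall>x\<ge>e. f x = g x"
  then show "trunc e f = trunc e g" unfolding trunc_def fun_eq_iff by simp
qed

lemma circle_eq_iff: "stokes_circle q = stokes_circle q' \<longleftrightarrow> (\<exists>n. q' = sigma_pow n q)"
proof
  assume "stokes_circle q = stokes_circle q'"
  moreover have "q' \<in> stokes_circle q'" unfolding stokes_circle_def by (auto intro: exI[of _ 0])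
  ultimately show "\<exists>n. q' = sigma_pow n q" unfolding stokes_circle_def by auto
next
  assume "\<exists>n. q' = sigma_pow n q"
  then obtain n where n: "q' = sigma_pow n q" by auto
  show "stokes_circle q = stokes_circle q'"
    unfolding stokes_circle_def n sigma_pow_add
  proof (intro equalityI subsetI)
    fix x assume "x \<in> {sigma_pow i q |i. True}"
    then obtain i where "x = sigma_pow i q" by auto
    then have "x = sigma_pow (i - n + n) q" by simp
    then show "x \<in> {sigma_pow (i + n) q |i. True}" by blast
  qed auto
qed

lemma ram_witness:
  assumes "is_expfac q"
  shows "ram q \<ge> 1 \<and> (\<forall>k \<in> supp_ef q. of_nat (ram q) * k \<in> \<int>)"
proof -
  let ?P = "\<lambda>r::nat. r \<ge> 1 \<and> (\<forall>k \<in> supp_ef q. of_nat r * k \<in> \<int>)"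
  have fin: "finite (supp_ef q)" using assms by (simp add: is_expfac_def)
  define p where "p = (\<Prod>k\<in>supp_ef q. denom k)"
  have ppos: "p > 0" unfolding p_def using denom_pos by (simp add: prod_pos)
  have "?P (nat p)"
  proof
    show "nat p \<ge> 1" using ppos by simp
    show "\<forall>k\<in>supp_ef q. of_nat (nat p) * k \<in> \<int>"
    proof
      fix k assume k: "k \<in> supp_ef q"
      have "denom k dvd p" unfolding p_def using fin k by (rule dvd_prodI)
      then have "of_int p * k \<in> \<int>" by (simp add: int_mult_Ints_iff)
      then show "of_nat (nat p) * k \<in> \<int>" using ppos by simp
    qed
  qed
  then show ?thesis unfolding ram_def by (rule LeastI)
qed

lemma ram_ge1: "is_expfac q \<Longrightarrow> ram q \<ge> 1" using ram_witness by blast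

lemma ram_Ints: "is_expfac q \<Longrightarrow> q k \<noteq> 0 \<Longrightarrow> of_nat (ram q) * k \<in> \<int>"
  using ram_witness by (auto simp: supp_ef_def)

lemma ram_dvd:
  assumes "is_expfac q" "\<And>k. q k \<noteq> 0 \<Longrightarrow> of_int n * k \<in> \<int>"
  shows "int (ram q) dvd n"
proof (cases "n = 0")
  case True then show ?thesis by simp
next
  case False
  define R where "R = int (ram q)"
  obtain u v where uv: "u * R + v * n = gcd R n" using bezout_int by blast
  define g where "g = gcd R n"
  have gpos: "g > 0" using False unfolding g_def by simp
  have "\<forall>k \<in> supp_ef q. of_int g * k \<in> \<int>"
  proof
    fix k assume "k \<in> supp_ef q"
    then have k: "q k \<noteq> 0" by (simp add: supp_ef_def)
    have g1: "(of_int g :: rat) = of_int u * of_int R + of_int v * of_int n"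
      using uv unfolding g_def by (metis of_int_add of_int_mult)
    have R1: "(of_int R :: rat) = of_nat (ram q)" by (simp add: R_def)
    have e: "of_int g * k = of_int u * (of_nat (ram q) * k) + of_int v * (of_int n * k)"
      unfolding g1 R1[symmetric] by (simp add: algebra_simps)
    show "of_int g * k \<in> \<int>" unfolding e
      by (intro Ints_add Ints_mult Ints_of_int ram_Ints[OF assms(1) k] assms(2)[OF k])
  qed
  then have "(nat g) \<ge> 1 \<and> (\<forall>k \<in> supp_ef q. of_nat (nat g) * k \<in> \<int>)" using gpos by simp
  then have "ram q \<le> nat g" unfolding ram_def by (rule Least_le)
  then have le1: "R \<le> g" unfolding R_def using gpos by (simp add: le_nat_iff)
  have "g dvd R" unfolding g_def by simp
  moreover have "R > 0" using ram_ge1[OF assms(1)] unfolding R_def by simp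
  ultimately have "g \<le> R" by (simp add: zdvd_imp_le)
  then have "g = R" using le1 by simp
  moreover have "g dvd n" unfolding g_def by simp
  ultimately show ?thesis unfolding R_def by simp
qed

section \<open>Levels\<close>

lemma slope_nonneg: "is_expfac d \<Longrightarrow> slope d \<ge> 0"
  using slope_eq_iff[of d "slope d"] by auto

lemma levels_char:
  assumes q: "is_expfac q" and l: "l > 0"
  shows "l \<in> Levels q \<longleftrightarrow> (\<exists>n. (\<forall>x>l. q x = 0 \<or> of_int n * x \<in> \<int>) \<and> q l \<noteq> 0 \<and> of_int n * l \<notin> \<int>)"
proof -
  have "l \<in> Levels q \<longleftrightarrow> (\<exists>n. slope (diff_ef q (sigma_pow n q)) = l)"
    using l unfolding Levels_def by auto
  also have "\<dots> \<longleftrightarrow> (\<exists>n. (\<forall>x>l. q x = 0 \<or> of_int n * x \<in> \<int>) \<and> q l \<noteq> 0 \<and> of_int n * l \<notin> \<int>)"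
  proof (intro ex_cong1)
    fix n
    have "slope (diff_ef q (sigma_pow n q)) = l \<longleftrightarrow> (\<forall>x>l. q x = sigma_pow n q x) \<and> q l \<noteq> sigma_pow n q l"
      using slope_diff_iff[of q "sigma_pow n q" l] q l by simp
    also have "\<dots> \<longleftrightarrow> (\<forall>x>l. q x = 0 \<or> of_int n * x \<in> \<int>) \<and> q l \<noteq> 0 \<and> of_int n * l \<notin> \<int>"
      using sigma_pow_eq_self[of n q] by (metis (no_types, lifting))
    finally show "slope (diff_ef q (sigma_pow n q)) = l \<longleftrightarrow> (\<forall>x>l. q x = 0 \<or> of_int n * x \<in> \<int>) \<and> q l \<noteq> 0 \<and> of_int n * l \<notin> \<int>" .
  qed
  finally show ?thesis .
qed

lemma levels_pos: "is_expfac q \<Longrightarrow> l \<in> Levels q \<Longrightarrow> l > 0"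
  unfolding Levels_def using slope_nonneg is_expfac_diff is_expfac_sigma
  by (smt (verit, ccfv_SIG) DiffE insertI1 mem_Collect_eq order_less_le)

lemma levels_supp: "is_expfac q \<Longrightarrow> l \<in> Levels q \<Longrightarrow> q l \<noteq> 0"
  using levels_char levels_pos by blast

lemma finite_Levels: "is_expfac q \<Longrightarrow> finite (Levels q)"
proof -
  assume q: "is_expfac q"
  have "Levels q \<subseteq> {k. q k \<noteq> 0}" using levels_supp[OF q] by auto
  then show ?thesis using is_expfac_finite[OF q] by (rule finite_subset)
qed

lemma levels_transfer:
  assumes "is_expfac q" "is_expfac q'" "l > 0" "\<forall>x\<ge>l. q x = q' x"
  shows "l \<in> Levels q \<longleftrightarrow> l \<in> Levels q'"
  unfolding levels_char[OF assms(1,3)] levels_char[OF assms(2,3)] using assms(4) by auto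

lemma level_ram_pos: "finite L \<Longrightarrow> level_ram L k > 0"
proof -
  assume fin: "finite L"
  have "finite (denom ` {l \<in> L. l \<ge> k})" using fin by simp
  moreover have "0 \<notin> denom ` {l \<in> L. l \<ge> k}" using denom_pos by (metis imageE less_irrefl)
  ultimately have "Lcm (denom ` {l \<in> L. l \<ge> k}) \<noteq> 0" by (simp add: Lcm_0_iff)
  moreover have "Lcm (denom ` {l \<in> L. l \<ge> k}) \<ge> 0" by simp
  ultimately show ?thesis unfolding level_ram_def by linarith
qed

lemma level_ram_dvd: "(\<And>l. l \<in> L \<Longrightarrow> l \<ge> k \<Longrightarrow> denom l dvd n) \<Longrightarrow> level_ram L k dvd n"
  unfolding level_ram_def by (auto simp: Lcm_dvd_iff)

lemma denom_dvd_level_ram: "l \<in> L \<Longrightarrow> l \<ge> k \<Longrightarrow> denom l dvd level_ram L k"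
  unfolding level_ram_def by (rule dvd_Lcm) auto

lemma adm_core:
  fixes e :: rat
  assumes "e = of_nat N / of_int (level_ram Ls L)" "\<And>l. l \<in> Ls \<Longrightarrow> l \<ge> L \<Longrightarrow> of_int n * l \<in> \<int>"
    "e > 0"
  shows "of_int n * e \<in> \<int>"
proof -
  have "level_ram Ls L dvd n"
    by (rule level_ram_dvd) (use assms(2) int_mult_Ints_iff in blast)
  then obtain u where u: "n = level_ram Ls L * u" by auto
  have "level_ram Ls L \<noteq> 0"
  proof
    assume "level_ram Ls L = 0"
    then have "e = 0" using assms(1) by simp
    then show False using assms(3) by simp
  qed
  then have "of_int n * e = of_int (u * int N)" unfolding u assms(1) by simp
  then show ?thesis by simp
qed

lemma adm_pos: "e \<in> admissible_exps L \<Longrightarrow> e > 0"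
  unfolding admissible_exps_def by auto

lemma adm_int:
  assumes q: "is_expfac q" and e: "e \<in> admissible_exps (Levels q)"
    and n: "\<And>x. x \<ge> e \<Longrightarrow> q x \<noteq> 0 \<Longrightarrow> of_int n * x \<in> \<int>"
  shows "of_int n * e \<in> \<int>"
  using e unfolding admissible_exps_def
proof (elim UnE CollectE exE conjE UN_E)
  fix N :: nat assume "e = of_nat N" then show ?thesis by simp
next
  fix L N assume L: "L \<in> Levels q" and e0: "0 < e" "e \<le> L" and eN: "e = of_nat N / of_int (level_ram (Levels q) L)"
  show ?thesis
  proof (rule adm_core[OF eN _ e0(1)])
    fix l assume "l \<in> Levels q" "l \<ge> L"
    then show "of_int n * l \<in> \<int>" using n levels_supp[OF q] e0(2) by force
  qed
qed

lemma adm_int_strict: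
  assumes q: "is_expfac q" and e: "e \<in> admissible_exps (Levels q)" and nl: "e \<notin> Levels q"
    and n: "\<And>x. x > e \<Longrightarrow> q x \<noteq> 0 \<Longrightarrow> of_int n * x \<in> \<int>"
  shows "of_int n * e \<in> \<int>"
  using e unfolding admissible_exps_def
proof (elim UnE CollectE exE conjE UN_E)
  fix N :: nat assume "e = of_nat N" then show ?thesis by simp
next
  fix L N assume L: "L \<in> Levels q" and e0: "0 < e" "e \<le> L" and eN: "e = of_nat N / of_int (level_ram (Levels q) L)"
  have "L \<noteq> e" using L nl by auto
  then have eL: "e < L" using e0 by simp
  show ?thesis
  proof (rule adm_core[OF eN _ e0(1)])
    fix l assume "l \<in> Levels q" "l \<ge> L"
    then show "of_int n * l \<in> \<int>" using n levels_supp[OF q] eL by force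
  qed
qed

lemma ram_mult_adm:
  assumes q: "is_expfac q" and e: "e \<in> admissible_exps (Levels q)"
  shows "of_nat (ram q) * e \<in> \<int>"
  using adm_int[OF q e, of "int (ram q)"] ram_Ints[OF q] by simp

lemma levels_adm:
  assumes q: "is_expfac q" and l: "l \<in> Levels q"
  shows "l \<in> admissible_exps (Levels q)"
proof -
  let ?t = "level_ram (Levels q) l"
  have t: "?t > 0" using level_ram_pos finite_Levels[OF q] by blast
  have "denom l dvd ?t" using l by (rule denom_dvd_level_ram) simp
  then have "of_int ?t * l \<in> \<int>" by (simp add: int_mult_Ints_iff)
  then obtain z where z: "of_int ?t * l = of_int z" by (auto elim: Ints_cases)
  have lp: "l > 0" using levels_pos[OF q l] .
  then have "z > 0" using z t by (metis of_int_0_less_iff zero_less_mult_iff)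
  have "l = of_nat (nat z) / of_int ?t" using z t \<open>z > 0\<close> by (simp add: field_simps)
  then show ?thesis unfolding admissible_exps_def using l lp by blast
qed

lemma adm_transfer:
  assumes q: "is_expfac q" and q': "is_expfac q'" and e: "e \<in> admissible_exps (Levels q)"
    and agree: "\<forall>x\<ge>e. q x = q' x"
  shows "e \<in> admissible_exps (Levels q')"
  using e unfolding admissible_exps_def
proof (elim UnE CollectE exE conjE UN_E)
  fix N :: nat assume "e = of_nat N" "N > 0" then show "e \<in> {k. \<exists>n>0. k = of_nat n} \<union> (\<Union>ki\<in>Levels q'. {k. 0 < k \<and> k \<le> ki \<and> (\<exists>n. k = of_nat n / of_int (level_ram (Levels q') ki))})" by auto
next
  fix L N assume L: "L \<in> Levels q" and e0: "0 < e" "e \<le> L" and eN: "e = of_nat N / of_int (level_ram (Levels q) L)"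
  have same: "\<And>l. l \<ge> e \<Longrightarrow> l \<in> Levels q \<longleftrightarrow> l \<in> Levels q'"
    using levels_transfer[OF q q'] agree e0(1) by auto
  then have "{l \<in> Levels q. l \<ge> L} = {l \<in> Levels q'. l \<ge> L}" using e0(2) by auto
  then have "level_ram (Levels q) L = level_ram (Levels q') L" unfolding level_ram_def by simp
  moreover have "L \<in> Levels q'" using same L e0(2) by auto
  ultimately show "e \<in> {k. \<exists>n>0. k = of_nat n} \<union> (\<Union>ki\<in>Levels q'. {k. 0 < k \<and> k \<le> ki \<and> (\<exists>n. k = of_nat n / of_int (level_ram (Levels q') ki))})"
    using eN e0 by auto
qed

lemma adm_transfer_strict:
  assumes q: "is_expfac q" and q': "is_expfac q'" and e: "e \<in> admissible_exps (Levels q)"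
    and nl: "e \<notin> Levels q" and agree: "\<forall>x>e. q x = q' x"
  shows "e \<in> admissible_exps (Levels q')"
  using e unfolding admissible_exps_def
proof (elim UnE CollectE exE conjE UN_E)
  fix N :: nat assume "e = of_nat N" "N > 0" then show "e \<in> {k. \<exists>n>0. k = of_nat n} \<union> (\<Union>ki\<in>Levels q'. {k. 0 < k \<and> k \<le> ki \<and> (\<exists>n. k = of_nat n / of_int (level_ram (Levels q') ki))})" by auto
next
  fix L N assume L: "L \<in> Levels q" and e0: "0 < e" "e \<le> L" and eN: "e = of_nat N / of_int (level_ram (Levels q) L)"
  have eL: "e < L" using L nl e0 by (metis order_le_less)
  have same: "\<And>l. l \<ge> L \<Longrightarrow> l \<in> Levels q \<longleftrightarrow> l \<in> Levels q'"
  proof -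
    fix l assume "l \<ge> L"
    then show "l \<in> Levels q \<longleftrightarrow> l \<in> Levels q'"
      using levels_transfer[OF q q', of l] agree e0(1) eL by auto
  qed
  then have "{l \<in> Levels q. l \<ge> L} = {l \<in> Levels q'. l \<ge> L}" by auto
  then have "level_ram (Levels q) L = level_ram (Levels q') L" unfolding level_ram_def by simp
  moreover have "L \<in> Levels q'" using same L by auto
  ultimately show "e \<in> {k. \<exists>n>0. k = of_nat n} \<union> (\<Union>ki\<in>Levels q'. {k. 0 < k \<and> k \<le> ki \<and> (\<exists>n. k = of_nat n / of_int (level_ram (Levels q') ki))})"
    using eN e0 by auto
qed

lemma slope_diff_sym: "is_expfac f \<Longrightarrow> is_expfac g \<Longrightarrow> slope (diff_ef f g) = slope (diff_ef g f)"
  using slope_diff_iff[of f g "slope (diff_ef g f)"] slope_diff_iff[of g f "slope (diff_ef g f)"] by metis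

lemma not_adm_not_int:
  assumes q: "is_expfac q" and e0: "e0 > 0" and na: "e0 \<notin> admissible_exps (Levels q)"
  shows "of_int (level_ram (Levels q) e0) * e0 \<notin> \<int>"
proof
  let ?t = "level_ram (Levels q) e0"
  assume "of_int ?t * e0 \<in> \<int>"
  then obtain z where z: "of_int ?t * e0 = of_int z" by (auto elim: Ints_cases)
  have fin: "finite (Levels q)" using finite_Levels[OF q] .
  have t: "?t > 0" using level_ram_pos[OF fin] .
  have zp: "z > 0" using z t e0 by (metis of_int_0_less_iff zero_less_mult_iff)
  have e0z: "e0 = of_nat (nat z) / of_int ?t" using z t zp by (simp add: field_simps)
  define S where "S = {l \<in> Levels q. l \<ge> e0}"
  show False
  proof (cases "S = {}")
    case True
    then have "{l \<in> Levels q. l \<ge> e0} = {}" unfolding S_def by simp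
    then have "?t = 1" unfolding level_ram_def by (simp only: image_empty Lcm_empty)
    then have "e0 = of_nat (nat z)" using e0z by simp
    then have "e0 \<in> {k. \<exists>n::nat. n > 0 \<and> k = of_nat n}" using zp by (intro CollectI exI[of _ "nat z"]) simp
    then show False using na unfolding admissible_exps_def by blast
  next
    case False
    have finS: "finite S" unfolding S_def using fin by simp
    define L0 where "L0 = Min S"
    have L0S: "L0 \<in> S" unfolding L0_def using finS False by simp
    have L0min: "\<And>l. l \<in> S \<Longrightarrow> L0 \<le> l" unfolding L0_def using finS by simp
    have "{l \<in> Levels q. l \<ge> L0} = S" using L0S L0min unfolding S_def by force
    then have "level_ram (Levels q) L0 = ?t" unfolding level_ram_def S_def by simp
    then have "e0 = of_nat (nat z) / of_int (level_ram (Levels q) L0)" using e0z by simp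
    moreover have "L0 \<in> Levels q" "e0 \<le> L0" using L0S unfolding S_def by auto
    ultimately show False using na e0 unfolding admissible_exps_def by blast
  qed
qed

lemma adm_int_lr:
  assumes q: "is_expfac q" and e: "e \<in> admissible_exps (Levels q)" and ee: "e \<ge> e0"
  shows "of_int (level_ram (Levels q) e0) * e \<in> \<int>"
  using e unfolding admissible_exps_def
proof (elim UnE CollectE exE conjE UN_E)
  fix N :: nat assume "e = of_nat N" then show ?thesis by simp
next
  fix L N assume L: "L \<in> Levels q" and e0: "0 < e" "e \<le> L" and eN: "e = of_nat N / of_int (level_ram (Levels q) L)"
  show ?thesis
  proof (rule adm_core[OF eN _ e0(1)])
    fix l assume "l \<in> Levels q" "l \<ge> L"
    then have "denom l dvd level_ram (Levels q) e0" using ee e0(2) by (intro denom_dvd_level_ram) auto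
    then show "of_int (level_ram (Levels q) e0) * l \<in> \<int>" by (simp add: int_mult_Ints_iff)
  qed
qed

lemma level_ram_dvd_ram:
  assumes q: "is_expfac q"
  shows "level_ram (Levels q) e0 dvd int (ram q)"
proof (rule level_ram_dvd)
  fix l assume "l \<in> Levels q"
  then have "of_nat (ram q) * l \<in> \<int>" using ram_Ints[OF q] levels_supp[OF q] by simp
  then have "of_int (int (ram q)) * l \<in> \<int>" by simp
  then show "denom l dvd int (ram q)" by (simp only: int_mult_Ints_iff)
qed

lemma key_T:
  assumes q: "is_expfac q" and f: "is_expfac f" and e0: "e0 > 0" and fe0: "f e0 \<noteq> 0"
    and na: "e0 \<notin> admissible_exps (Levels q)"
    and above: "\<And>e. e > e0 \<Longrightarrow> f e \<noteq> 0 \<Longrightarrow> e \<in> admissible_exps (Levels q)"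
  shows "slope (diff_ef f (sigma_pow (level_ram (Levels q) e0) f)) = e0"
proof -
  let ?t = "level_ram (Levels q) e0"
  have "\<forall>x>e0. f x = sigma_pow ?t f x"
  proof (intro allI impI)
    fix x assume x: "x > e0"
    show "f x = sigma_pow ?t f x"
    proof (cases "f x = 0")
      case True then show ?thesis by (simp add: sigma_pow_apply)
    next
      case False
      then have "x \<in> admissible_exps (Levels q)" using above x by blast
      then have "of_int ?t * x \<in> \<int>" using adm_int_lr[OF q] x by simp
      then show ?thesis using sigma_pow_eq_self[of ?t f x] by simp
    qed
  qed
  moreover have "f e0 \<noteq> sigma_pow ?t f e0"
    using sigma_pow_eq_self[of ?t f e0] fe0 not_adm_not_int[OF q e0 na] by auto
  ultimately show ?thesis using slope_diff_iff[OF f, of "sigma_pow ?t f" e0] f e0 by simp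
qed

lemma supp_adm:
  assumes q: "is_expfac q" and qe: "q e \<noteq> 0"
  shows "e \<in> admissible_exps (Levels q)"
proof (rule ccontr)
  assume ne: "e \<notin> admissible_exps (Levels q)"
  define S where "S = {x. q x \<noteq> 0 \<and> x \<notin> admissible_exps (Levels q)}"
  have finS: "finite S" unfolding S_def using is_expfac_finite[OF q] by (rule rev_finite_subset) auto
  have eS: "e \<in> S" unfolding S_def using qe ne by simp
  define e0 where "e0 = Max S"
  have e0S: "e0 \<in> S" unfolding e0_def using finS eS by (metis Max_in empty_iff)
  have e0max: "\<And>x. x \<in> S \<Longrightarrow> x \<le> e0" unfolding e0_def using finS by simp
  have qe0: "q e0 \<noteq> 0" and nae0: "e0 \<notin> admissible_exps (Levels q)" using e0S unfolding S_def by auto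
  have e0p: "e0 > 0" using is_expfacD[OF q qe0] .
  have "slope (diff_ef q (sigma_pow (level_ram (Levels q) e0) q)) = e0"
  proof (rule key_T[OF q q e0p qe0 nae0])
    fix x assume "x > e0" "q x \<noteq> 0"
    then show "x \<in> admissible_exps (Levels q)" using e0max unfolding S_def by force
  qed
  then have "e0 \<in> Levels q" unfolding Levels_def using e0p by (metis (mono_tags, lifting) CollectI DiffI less_irrefl singletonD)
  then show False using levels_adm[OF q] nae0 by blast
qed

lemma le_slope: "is_expfac q \<Longrightarrow> q e \<noteq> 0 \<Longrightarrow> e \<le> slope q"
proof -
  assume q: "is_expfac q" and e: "q e \<noteq> 0"
  have "e \<in> supp_ef q" using e by (simp add: supp_ef_def)
  moreover have "finite (supp_ef q)" using q by (simp add: is_expfac_def)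
  ultimately show ?thesis unfolding slope_def by auto
qed

lemma ram_sigma: "ram (sigma_pow n q) = ram q"
  unfolding ram_def by simp

lemma sigma_mod:
  assumes R: "R > 0" and f: "\<And>x. f x \<noteq> 0 \<Longrightarrow> of_int R * x \<in> \<int>"
  shows "sigma_pow k f = sigma_pow (k mod R) f"
proof (rule ext)
  fix x
  show "sigma_pow k f x = sigma_pow (k mod R) f x"
  proof (cases "f x = 0")
    case True then show ?thesis by (simp add: sigma_pow_apply)
  next
    case False
    have k: "k = (k div R) * R + k mod R" by simp
    have k': "(of_int k :: rat) = of_int (k div R) * of_int R + of_int (k mod R)"
      by (metis k of_int_add of_int_mult)
    have "of_int k * x - of_int (k mod R) * x = of_int (k div R) * (of_int R * x)"
      unfolding k' by (simp add: algebra_simps)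
    also have "\<dots> \<in> \<int>" by (rule Ints_mult[OF Ints_of_int f[OF False]])
    finally show ?thesis unfolding sigma_pow_apply using zeta_eq_iff by simp
  qed
qed

locale PQ =
  fixes Q :: pit
  assumes pit: "pointed_irregular_type Q" and comp: "compatible Q"
begin

abbreviation qq :: "nat \<Rightarrow> expfac" where "qq i \<equiv> snd (Q ! i)"
abbreviation adm :: "nat \<Rightarrow> rat set" where "adm i \<equiv> admissible_exps (Levels (qq i))"
abbreviation rr :: nat where "rr \<equiv> cfg_r Q"
abbreviation KK :: rat where "KK \<equiv> cfg_K Q"
abbreviation ss :: nat where "ss \<equiv> cfg_s Q"
definition node_of :: "rat \<Rightarrow> nat \<Rightarrow> node" where "node_of e i = (e, stokes_circle (trunc e (qq i)))"
definition qa :: "(nat \<times> nat \<Rightarrow> complex) \<Rightarrow> nat \<Rightarrow> expfac" where "qa a i = snd (Q_of Q a ! i)"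

lemma qq_exp: "i < length Q \<Longrightarrow> is_expfac (qq i)"
  using pit unfolding pointed_irregular_type_def by blast

lemma circ_trunc_eq:
  assumes "i < length Q" "j < length Q" "e > 0"
  shows "stokes_circle (trunc e (qq i)) = stokes_circle (trunc e (qq j)) \<longleftrightarrow> trunc e (qq i) = trunc e (qq j)"
  using comp assms unfolding compatible_def by metis

lemma rr_pos: "rr > 0"
proof -
  have "0 \<notin> set (map (\<lambda>p. ram (snd p)) Q)"
  proof
    assume "0 \<in> set (map (\<lambda>p. ram (snd p)) Q)"
    then obtain i where i: "i < length Q" "ram (qq i) = 0" by (auto simp: in_set_conv_nth)
    then show False using ram_ge1[OF qq_exp[OF i(1)]] by simp
  qed
  then have "cfg_r Q \<noteq> 0" unfolding cfg_r_def using Lcm_0_iff_nat[of "set (map (\<lambda>p. ram (snd p)) Q)"] by blast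
  then show ?thesis by simp
qed

lemma ram_dvd_rr: "i < length Q \<Longrightarrow> ram (qq i) dvd rr"
proof -
  assume i: "i < length Q"
  have "ram (qq i) \<in> set (map (\<lambda>p. ram (snd p)) Q)" using nth_mem[OF i] by auto
  then show ?thesis unfolding cfg_r_def by (rule dvd_Lcm)
qed

lemma slope_le_K: "i < length Q \<Longrightarrow> slope (qq i) \<le> KK"
proof -
  assume i: "i < length Q"
  have "slope (qq i) \<in> set (map (\<lambda>p. slope (snd p)) Q)" using nth_mem[OF i] by auto
  then show ?thesis unfolding cfg_K_def by (intro Max_ge) auto
qed

lemma supp_le_K: "i < length Q \<Longrightarrow> qq i e \<noteq> 0 \<Longrightarrow> e \<le> KK"
  using le_slope[OF qq_exp] slope_le_K order_trans by blast

lemma rr_mult_adm: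
  assumes i: "i < length Q" and e: "e \<in> adm i"
  shows "of_nat rr * e \<in> \<int>"
proof -
  obtain u where u: "rr = ram (qq i) * u" using ram_dvd_rr[OF i] by auto
  have eq: "of_nat rr * e = of_nat u * (of_nat (ram (qq i)) * e)" unfolding u by (simp add: algebra_simps)
  show ?thesis unfolding eq by (intro Ints_mult Ints_of_nat ram_mult_adm[OF qq_exp[OF i] e])
qed

lemma AQ_iff: "e \<in> AQ Q \<longleftrightarrow> (\<exists>i<length Q. e \<in> adm i)"
  unfolding AQ_def by auto

lemma AQ_rr: "e \<in> AQ Q \<Longrightarrow> of_nat rr * e \<in> \<int> \<and> e > 0"
  using AQ_iff rr_mult_adm adm_pos by blast

lemma supp_AQ: "i < length Q \<Longrightarrow> qq i e \<noteq> 0 \<Longrightarrow> e \<in> AQ Q"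
  using supp_adm[OF qq_exp] AQ_iff by blast

lemma pos_Ints_nat: "(x::rat) \<in> \<int> \<Longrightarrow> x > 0 \<Longrightarrow> \<exists>j::nat. j \<ge> 1 \<and> x = of_nat j"
proof -
  assume "x \<in> \<int>" "x > 0"
  then obtain z where z: "x = of_int z" by (auto elim: Ints_cases)
  then have "z > 0" using \<open>x > 0\<close> by simp
  then show ?thesis using z by (intro exI[of _ "nat z"]) simp
qed

lemma j_of:
  assumes "of_nat rr * e \<in> \<int>" "e > 0" "e \<le> KK"
  shows "\<exists>j. 1 \<le> j \<and> j \<le> ss \<and> e = of_nat j / of_nat rr"
proof -
  have "of_nat rr * e > 0" using assms(2) rr_pos by simp
  then obtain j :: nat where j: "j \<ge> 1" "of_nat rr * e = of_nat j" using pos_Ints_nat assms(1) by blast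
  have e: "e = of_nat j / of_nat rr" using j rr_pos by (simp add: field_simps)
  have "of_nat j \<le> of_nat rr * KK" using j(2) assms(3) rr_pos by (metis mult_left_mono of_nat_0_le_iff)
  then have "int j \<le> \<lfloor>of_nat rr * KK\<rfloor>" by (simp add: le_floor_iff)
  then have "j \<le> ss" unfolding cfg_s_def by linarith
  then show ?thesis using j e by blast
qed

lemma j_le_K:
  assumes "1 \<le> j" "j \<le> ss"
  shows "(of_nat j / of_nat rr :: rat) \<le> KK" "(of_nat j / of_nat rr :: rat) > 0"
proof -
  have "int j \<le> \<lfloor>of_nat rr * KK\<rfloor>" using assms unfolding cfg_s_def by linarith
  then have "of_nat j \<le> of_nat rr * KK" by (simp add: le_floor_iff)
  then show "(of_nat j / of_nat rr :: rat) \<le> KK" using rr_pos by (simp add: field_simps)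
  show "(of_nat j / of_nat rr :: rat) > 0" using assms rr_pos by simp
qed

lemma len_Qof[simp]: "length (Q_of Q a) = length Q"
  unfolding Q_of_def by simp

lemma fst_Qof: "i < length Q \<Longrightarrow> fst (Q_of Q a ! i) = fst (Q ! i)"
  unfolding Q_of_def by simp

lemma jr_inj: "(of_nat j / of_nat rr :: rat) = of_nat j' / of_nat rr \<longleftrightarrow> j = j'"
  using rr_pos by (simp add: divide_cancel_right)

lemma qa_eq:
  assumes "i < length Q"
  shows "qa a i = (\<lambda>k. \<Sum>j = 1..ss. if k = of_nat j / of_nat rr then a (i, j) else 0)"
proof -
  have u: "[0..<length Q] ! i = i" using assms by simp
  show ?thesis unfolding qa_def Q_of_def using assms by (simp only: nth_map length_upt u) simp
qed

lemma qa_at: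
  assumes "i < length Q" "1 \<le> j" "j \<le> ss"
  shows "qa a i (of_nat j / of_nat rr) = a (i, j)"
proof -
  have "qa a i (of_nat j / of_nat rr) = (\<Sum>j' = 1..ss. if of_nat j / of_nat rr = (of_nat j' / of_nat rr :: rat) then a (i, j') else 0)"
    unfolding qa_eq[OF assms(1)] by simp
  also have "\<dots> = (\<Sum>j' = 1..ss. if j = j' then a (i, j') else 0)"
    by (rule sum.cong[OF refl]) (simp only: jr_inj)
  also have "\<dots> = a (i, j)" using assms by (simp add: sum.delta)
  finally show ?thesis .
qed

lemma qa_off:
  assumes "i < length Q" "\<And>j. 1 \<le> j \<Longrightarrow> j \<le> ss \<Longrightarrow> e \<noteq> of_nat j / of_nat rr"
  shows "qa a i e = 0"
  unfolding qa_eq[OF assms(1)] using assms by (auto intro!: sum.neutral)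

lemma qa_exp:
  assumes i: "i < length Q"
  shows "is_expfac (qa a i)"
proof -
  have "supp_ef (qa a i) \<subseteq> (\<lambda>j. of_nat j / of_nat rr) ` {1..ss}"
  proof
    fix e assume "e \<in> supp_ef (qa a i)"
    then have "qa a i e \<noteq> 0" by (simp add: supp_ef_def)
    then obtain j where "1 \<le> j" "j \<le> ss" "e = of_nat j / of_nat rr" using qa_off[OF i] by blast
    then show "e \<in> (\<lambda>j. of_nat j / of_nat rr) ` {1..ss}" by auto
  qed
  moreover have "\<forall>e \<in> (\<lambda>j. of_nat j / of_nat rr) ` {1..ss}. (e::rat) > 0" using rr_pos by auto
  ultimately show ?thesis unfolding is_expfac_def by (meson finite_atLeastAtMost finite_imageI finite_subset subsetD)
qed

end




lemma NUM1:
  fixes R n :: int and h :: rat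
  assumes R: "R > 0" and Rn: "R dvd n"
  shows "of_nat (nat (lcm R (denom h) div R)) * (of_int n * h) \<in> \<int>"
proof -
  define L where "L = lcm R (denom h)"
  have L0: "L \<ge> 0" unfolding L_def by simp
  have RL: "R dvd L" unfolding L_def by simp
  then obtain v where v: "L = R * v" by auto
  have Ld: "L div R = v" using v R by simp
  have v0: "v \<ge> 0" using L0 R v by (metis zero_le_mult_iff not_less)
  obtain u where u: "n = R * u" using Rn by auto
  have bL: "denom h dvd L" unfolding L_def by simp
  then have Lh: "of_int L * h \<in> \<int>" by (simp add: int_mult_Ints_iff)
  have "of_nat (nat (L div R)) * (of_int n * h) = of_int u * (of_int L * h)"
    unfolding Ld u using v0 v by (simp add: algebra_simps)
  also have "\<dots> \<in> \<int>" by (rule Ints_mult[OF Ints_of_int Lh])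
  finally show ?thesis unfolding L_def .
qed

context PQ
begin

lemma R_D:
  assumes "c \<in> R_space Q"
  shows "(\<forall>v. v \<notin> A_flat Q \<longrightarrow> c v = 0) \<and>
     (\<forall>v \<in> A_flat Q. mandatory_node Q v \<longrightarrow> c v \<noteq> 0) \<and>
     (\<forall>u \<in> A_flat Q. \<forall>w \<in> A_flat Q. \<forall>p. u \<noteq> w \<and>
        \<not> mandatory_node Q u \<and> \<not> mandatory_node Q w \<and>
        is_parent Q u p \<and> is_parent Q w p \<longrightarrow> c u \<noteq> c w) \<and>
     (\<forall>u \<in> A_flat Q. \<forall>w \<in> A_flat Q. \<forall>p. u \<noteq> w \<and>
        mandatory_node Q u \<and> mandatory_node Q w \<and>
        is_parent Q u p \<and> is_parent Q w p \<longrightarrow> c u ^ node_N Q p \<noteq> c w ^ node_N Q p)"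
  using assms unfolding R_space_def by (rule CollectD)

lemma R_zero: "c \<in> R_space Q \<Longrightarrow> v \<notin> A_flat Q \<Longrightarrow> c v = 0"
proof -
  assume a: "c \<in> R_space Q" "v \<notin> A_flat Q"
  have H: "\<forall>v. v \<notin> A_flat Q \<longrightarrow> c v = 0" using R_D[OF a(1)] by (elim conjE)
  show ?thesis using mp[OF spec[OF H, of v] a(2)] .
qed
lemma R_mand: "c \<in> R_space Q \<Longrightarrow> v \<in> A_flat Q \<Longrightarrow> mandatory_node Q v \<Longrightarrow> c v \<noteq> 0"
proof -
  assume a: "c \<in> R_space Q" "v \<in> A_flat Q" "mandatory_node Q v"
  have H: "\<forall>v \<in> A_flat Q. mandatory_node Q v \<longrightarrow> c v \<noteq> 0" using R_D[OF a(1)] by (elim conjE)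
  show ?thesis using mp[OF bspec[OF H a(2)] a(3)] .
qed
lemma R_nonmand: "c \<in> R_space Q \<Longrightarrow> u \<in> A_flat Q \<Longrightarrow> w \<in> A_flat Q \<Longrightarrow> u \<noteq> w \<Longrightarrow>
   \<not> mandatory_node Q u \<Longrightarrow> \<not> mandatory_node Q w \<Longrightarrow> is_parent Q u p \<Longrightarrow> is_parent Q w p \<Longrightarrow> c u \<noteq> c w"
proof -
  assume a: "c \<in> R_space Q" "u \<in> A_flat Q" "w \<in> A_flat Q" "u \<noteq> w"
   "\<not> mandatory_node Q u" "\<not> mandatory_node Q w" "is_parent Q u p" "is_parent Q w p"
  have H: "\<forall>u \<in> A_flat Q. \<forall>w \<in> A_flat Q. \<forall>p. u \<noteq> w \<and>
        \<not> mandatory_node Q u \<and> \<not> mandatory_node Q w \<and>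
        is_parent Q u p \<and> is_parent Q w p \<longrightarrow> c u \<noteq> c w"
    using R_D[OF a(1)] by (elim conjE)
  show ?thesis using mp[OF spec[OF bspec[OF bspec[OF H a(2)] a(3)], of p]] a(4-) by simp
qed
lemma R_mand2: "c \<in> R_space Q \<Longrightarrow> u \<in> A_flat Q \<Longrightarrow> w \<in> A_flat Q \<Longrightarrow> u \<noteq> w \<Longrightarrow>
   mandatory_node Q u \<Longrightarrow> mandatory_node Q w \<Longrightarrow> is_parent Q u p \<Longrightarrow> is_parent Q w p \<Longrightarrow> c u ^ node_N Q p \<noteq> c w ^ node_N Q p"
proof -
  assume a: "c \<in> R_space Q" "u \<in> A_flat Q" "w \<in> A_flat Q" "u \<noteq> w"
   "mandatory_node Q u" "mandatory_node Q w" "is_parent Q u p" "is_parent Q w p"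
  have H: "\<forall>u \<in> A_flat Q. \<forall>w \<in> A_flat Q. \<forall>p. u \<noteq> w \<and>
        mandatory_node Q u \<and> mandatory_node Q w \<and>
        is_parent Q u p \<and> is_parent Q w p \<longrightarrow> c u ^ node_N Q p \<noteq> c w ^ node_N Q p"
    using R_D[OF a(1)] by (elim conjE)
  show ?thesis using mp[OF spec[OF bspec[OF bspec[OF H a(2)] a(3)], of p]] a(4-) by simp
qed

lemma qa_coeff:
  assumes i: "i < length Q"
  shows "qa (coeff_map Q c) i e = (if e \<in> adm i \<and> e \<le> KK then c (node_of e i) else 0)"
proof (cases "\<exists>j. 1 \<le> j \<and> j \<le> ss \<and> e = of_nat j / of_nat rr")
  case True
  then obtain j where j: "1 \<le> j" "j \<le> ss" "e = of_nat j / of_nat rr" by blast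
  have idx: "(i, j) \<in> cfg_index Q" unfolding cfg_index_def using i j by simp
  have "qa (coeff_map Q c) i e = coeff_map Q c (i, j)" unfolding j(3) by (rule qa_at[OF i j(1,2)])
  also have "\<dots> = (if e \<in> adm i then c (node_of e i) else 0)"
    unfolding coeff_map_def node_of_def using idx j(3) by simp
  finally show ?thesis using j_le_K[OF j(1,2)] j(3) by simp
next
  case False
  then have "qa (coeff_map Q c) i e = 0" using qa_off[OF i] by blast
  moreover have "\<not> (e \<in> adm i \<and> e \<le> KK)"
  proof
    assume "e \<in> adm i \<and> e \<le> KK"
    then show False using j_of[OF rr_mult_adm[OF i] adm_pos] False by blast
  qed
  ultimately show ?thesis by auto
qed

lemma next_AQ:
  assumes h: "h \<in> AQ Q"
  shows "\<exists>h'. h' \<in> AQ Q \<and> h < h' \<and> (\<forall>k''\<in>AQ Q. \<not> (h < k'' \<and> k'' < h'))"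
proof -
  obtain i0 where i0: "i0 < length Q" using h AQ_iff by blast
  define n0 :: nat where "n0 = nat \<lfloor>h\<rfloor> + 1"
  have hp: "h > 0" using AQ_rr[OF h] by simp
  have fl: "\<lfloor>h\<rfloor> \<ge> 0" using hp by simp
  have "(of_nat n0 :: rat) = of_int (\<lfloor>h\<rfloor> + 1)" unfolding n0_def using fl by simp
  then have n0h: "of_nat n0 > h" using floor_correct[of h] by simp
  have "(of_nat n0 :: rat) \<in> adm i0" unfolding admissible_exps_def n0_def by auto
  then have n0A: "(of_nat n0 :: rat) \<in> AQ Q" using AQ_iff i0 by blast
  define X where "X = {j::nat. of_nat j / of_nat rr \<in> AQ Q \<and> h < of_nat j / of_nat rr}"
  have "rr * n0 \<in> X" unfolding X_def using n0A n0h rr_pos by simp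
  then have ex: "\<exists>j. j \<in> X" by blast
  define j0 where "j0 = (LEAST j. j \<in> X)"
  have j0X: "j0 \<in> X" unfolding j0_def using ex by (metis LeastI)
  have j0min: "\<And>j. j \<in> X \<Longrightarrow> j0 \<le> j" unfolding j0_def by (rule Least_le)
  define h' where "h' = (of_nat j0 / of_nat rr :: rat)"
  have "h' \<in> AQ Q" "h < h'" using j0X unfolding X_def h'_def by auto
  moreover have "\<forall>k''\<in>AQ Q. \<not> (h < k'' \<and> k'' < h')"
  proof (intro ballI notI)
    fix k'' assume k: "k'' \<in> AQ Q" and hk: "h < k'' \<and> k'' < h'"
    have "of_nat rr * k'' \<in> \<int>" "k'' > 0" using AQ_rr[OF k] by auto
    moreover have "of_nat rr * k'' > 0" using \<open>k'' > 0\<close> rr_pos by simp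
    ultimately obtain j1 :: nat where j1: "of_nat rr * k'' = of_nat j1" using pos_Ints_nat by blast
    have k1: "k'' = of_nat j1 / of_nat rr" using j1 rr_pos by (simp add: field_simps)
    have "j1 \<in> X" unfolding X_def using k hk k1 by simp
    then have "j0 \<le> j1" by (rule j0min)
    then have "h' \<le> k''" unfolding h'_def k1 using rr_pos by (simp add: divide_right_mono)
    then show False using hk by simp
  qed
  ultimately show ?thesis by blast
qed

lemma node_of_eq:
  assumes "i < length Q" "j < length Q" "e > 0"
  shows "node_of e i = node_of e j \<longleftrightarrow> trunc e (qq i) = trunc e (qq j)"
  unfolding node_of_def using circ_trunc_eq[OF assms] by simp

lemma mand_iff:
  assumes i: "i < length Q" and e: "e > 0"
  shows "mandatory_node Q (node_of e i) \<longleftrightarrow> e \<in> Levels (qq i)"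
proof
  assume "mandatory_node Q (node_of e i)"
  then obtain i' where i': "i' < length Q" "stokes_circle (trunc e (qq i)) = stokes_circle (trunc e (qq i'))"
    "e \<in> Levels (qq i')" unfolding mandatory_node_def node_of_def by auto
  then have "trunc e (qq i) = trunc e (qq i')" using circ_trunc_eq[OF i i'(1) e] by simp
  then have "\<forall>x\<ge>e. qq i x = qq i' x" by (simp add: trunc_eq_iff)
  then show "e \<in> Levels (qq i)" using levels_transfer[OF qq_exp[OF i] qq_exp[OF i'(1)] e] i'(3) by simp
next
  assume "e \<in> Levels (qq i)"
  then show "mandatory_node Q (node_of e i)" unfolding mandatory_node_def node_of_def using i by auto
qed

lemma node_in_A_flat:
  assumes i: "i < length Q" and e: "e \<in> adm i" "e \<le> KK"
  shows "node_of e i \<in> A_flat Q"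
  unfolding A_flat_def admissible_node_def node_of_def using i e by auto

lemma parent_of:
  assumes i: "i < length Q" and h: "h \<in> AQ Q" and h': "h' \<in> AQ Q" "h < h'" "\<forall>k''\<in>AQ Q. \<not> (h < k'' \<and> k'' < h')"
  shows "is_parent Q (node_of h i) (node_of h' i)"
  unfolding is_parent_def node_of_def using i h h' by blast

lemma children_height_eq:
  assumes h: "h \<in> AQ Q" and h': "h < h'" "\<forall>k''\<in>AQ Q. \<not> (h < k'' \<and> k'' < h')"
  shows "children_height Q (h', C) = h"
  unfolding children_height_def fst_conv
proof (rule Greatest_equality)
  show "h \<in> AQ Q \<and> h < h'" using h h' by simp
  fix y assume "y \<in> AQ Q \<and> y < h'"
  then show "y \<le> h" using h' by (meson not_le)
qed

lemma node_Ram_eq: "node_Ram (h', stokes_circle q) = ram q"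
proof -
  have "q \<in> stokes_circle q" unfolding stokes_circle_def by (auto intro: exI[of _ 0])
  then have "(SOME x. x \<in> stokes_circle q) \<in> stokes_circle q" by (rule someI[of "\<lambda>x. x \<in> stokes_circle q"])
  then obtain n where "(SOME x. x \<in> stokes_circle q) = sigma_pow n q" unfolding stokes_circle_def by auto
  then show ?thesis unfolding node_Ram_def by (simp add: ram_sigma)
qed


lemma A_main:
  assumes c: "c \<in> R_space Q" and i: "i < length Q" and j: "j < length Q"
  shows "slope (diff_ef (sigma_pow k (qa (coeff_map Q c) i)) (sigma_pow l (qa (coeff_map Q c) j)))
       = slope (diff_ef (sigma_pow k (qq i)) (sigma_pow l (qq j)))"
proof -
  define a where "a = coeff_map Q c"
  define h where "h = slope (diff_ef (sigma_pow k (qq i)) (sigma_pow l (qq j)))"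
  have qi: "is_expfac (qq i)" using qq_exp[OF i] .
  have qj: "is_expfac (qq j)" using qq_exp[OF j] .
  have hh: "0 \<le> h \<and> (\<forall>x>h. sigma_pow k (qq i) x = sigma_pow l (qq j) x) \<and> (0 < h \<longrightarrow> sigma_pow k (qq i) h \<noteq> sigma_pow l (qq j) h)"
    using slope_diff_iff[of "sigma_pow k (qq i)" "sigma_pow l (qq j)" h] qi qj h_def by simp
  have h0: "0 \<le> h" using hh by simp
  have H1: "\<And>x. x > h \<Longrightarrow> qq i x * zeta (of_int k * x) = qq j x * zeta (of_int l * x)"
    using hh by (simp add: sigma_pow_apply)
  have H2: "0 < h \<Longrightarrow> qq i h * zeta (of_int k * h) \<noteq> qq j h * zeta (of_int l * h)"
    using hh by (simp add: sigma_pow_apply)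
  define n where "n = k - l"
  have zk: "\<And>x. zeta (of_int k * x) = zeta (of_int n * x) * zeta (of_int l * x)"
    unfolding n_def by (simp add: zeta_add[symmetric] algebra_simps)
  have tr: "\<And>e. e > h \<Longrightarrow> trunc e (qq i) = trunc e (qq j)"
  proof -
    fix e assume e: "e > h"
    have "trunc e (qq j) = sigma_pow n (trunc e (qq i))"
    proof (rule ext)
      fix x show "trunc e (qq j) x = sigma_pow n (trunc e (qq i)) x"
      proof (cases "x \<ge> e")
        case True
        then have "qq i x * zeta (of_int k * x) = qq j x * zeta (of_int l * x)" using H1 e by simp
        then have "(qq i x * zeta (of_int n * x)) * zeta (of_int l * x) = qq j x * zeta (of_int l * x)"
          unfolding zk by (simp add: algebra_simps)
        then have "qq j x = qq i x * zeta (of_int n * x)" by simp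
        then show ?thesis using True by (simp add: trunc_def sigma_pow_apply)
      next
        case False then show ?thesis by (simp add: trunc_def sigma_pow_apply)
      qed
    qed
    then have "stokes_circle (trunc e (qq i)) = stokes_circle (trunc e (qq j))" using circle_eq_iff by blast
    then show "trunc e (qq i) = trunc e (qq j)" using circ_trunc_eq[OF i j] e h0 by simp
  qed
  have agree: "\<And>x. x > h \<Longrightarrow> qq i x = qq j x"
  proof -
    fix x assume "x > h"
    then have "trunc x (qq i) = trunc x (qq j)" by (rule tr)
    then show "qq i x = qq j x" by (simp add: trunc_eq_iff)
  qed
  have P: "\<And>x. x > h \<Longrightarrow> qq i x \<noteq> 0 \<Longrightarrow> of_int n * x \<in> \<int>"
  proof -
    fix x assume x: "x > h" and nz: "qq i x \<noteq> 0"
    have "qq i x * zeta (of_int k * x) = qq i x * zeta (of_int l * x)" using H1[OF x] agree[OF x] by simp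
    then have "zeta (of_int k * x) = zeta (of_int l * x)" using nz by simp
    then have "of_int k * x - of_int l * x \<in> \<int>" by (simp add: zeta_eq_iff)
    then show "of_int n * x \<in> \<int>" unfolding n_def by (simp add: algebra_simps)
  qed
  have Pj: "\<And>x. x > h \<Longrightarrow> qq j x \<noteq> 0 \<Longrightarrow> of_int n * x \<in> \<int>" using P agree by metis
  have adm_eq: "\<And>x. x > h \<Longrightarrow> x \<in> adm i \<longleftrightarrow> x \<in> adm j"
  proof -
    fix x assume x: "x > h"
    have ag: "\<forall>y\<ge>x. qq i y = qq j y" using agree x by simp
    then have ag': "\<forall>y\<ge>x. qq j y = qq i y" by simp
    show "x \<in> adm i \<longleftrightarrow> x \<in> adm j" using adm_transfer[OF qi qj _ ag] adm_transfer[OF qj qi _ ag'] by blast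
  qed
  have qaeq: "\<And>x. x > h \<Longrightarrow> qa a i x = qa a j x"
  proof -
    fix x assume x: "x > h"
    have "node_of x i = node_of x j" unfolding node_of_def using tr[OF x] by simp
    then show "qa a i x = qa a j x" unfolding a_def qa_coeff[OF i] qa_coeff[OF j] using adm_eq[OF x] by simp
  qed
  have Above: "\<forall>x>h. sigma_pow k (qa a i) x = sigma_pow l (qa a j) x"
  proof (intro allI impI)
    fix x assume x: "x > h"
    show "sigma_pow k (qa a i) x = sigma_pow l (qa a j) x"
    proof (cases "qa a i x = 0")
      case True then show ?thesis using qaeq[OF x] by (simp add: sigma_pow_apply)
    next
      case False
      then have xa: "x \<in> adm i" unfolding a_def qa_coeff[OF i] by (metis (full_types))
      have "of_int n * x \<in> \<int>"
        by (rule adm_int[OF qi xa]) (use P x in auto)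
      then have "zeta (of_int n * x) = 1" by simp
      then show ?thesis using qaeq[OF x] zk[of x] by (simp add: sigma_pow_apply)
    qed
  qed
  have AtH: "0 < h \<Longrightarrow> sigma_pow k (qa a i) h \<noteq> sigma_pow l (qa a j) h"
  proof -
    assume hp: "0 < h"
    have Hk: "qq i h * zeta (of_int k * h) \<noteq> qq j h * zeta (of_int l * h)" using H2 hp .
    have nz: "qq i h \<noteq> 0 \<or> qq j h \<noteq> 0" using Hk by auto
    have hK: "h \<le> KK" using nz supp_le_K[OF i] supp_le_K[OF j] by blast
    have hAQ: "h \<in> AQ Q" using nz supp_AQ[OF i] supp_AQ[OF j] by blast
    have qai: "qa a i h = (if h \<in> adm i then c (node_of h i) else 0)" unfolding a_def qa_coeff[OF i] using hK by simp
    have qaj: "qa a j h = (if h \<in> adm j then c (node_of h j) else 0)" unfolding a_def qa_coeff[OF j] using hK by simp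
    show ?thesis
    proof (cases "trunc h (qq i) = trunc h (qq j)")
      case True
      have eqh: "qq i h = qq j h" using True by (simp add: trunc_eq_iff)
      then have nzi: "qq i h \<noteq> 0" using nz by simp
      have zne: "zeta (of_int k * h) \<noteq> zeta (of_int l * h)" using Hk eqh by auto
      have nh: "of_int n * h \<notin> \<int>"
      proof
        assume "of_int n * h \<in> \<int>"
        then have "zeta (of_int n * h) = 1" by simp
        then show False using zne zk[of h] by simp
      qed
      have Li: "h \<in> Levels (qq i)"
        unfolding levels_char[OF qi hp] using P nzi nh by blast
      have Ai: "h \<in> adm i" using levels_adm[OF qi Li] .
      have Aj: "h \<in> adm j" using adm_transfer[OF qi qj Ai] True by (simp add: trunc_eq_iff)
      have ne: "node_of h i = node_of h j" unfolding node_of_def using True by simp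
      have Cnz: "c (node_of h i) \<noteq> 0"
        using R_mand[OF c node_in_A_flat[OF i Ai hK]] mand_iff[OF i hp] Li by blast
      show ?thesis unfolding sigma_pow_apply qai qaj using Ai Aj ne Cnz zne by simp
    next
      case False
      have nodene: "node_of h i \<noteq> node_of h j" using node_of_eq[OF i j hp] False by simp
      have agS: "\<forall>x>h. qq i x = qq j x" using agree by blast
      have agS': "\<forall>x>h. qq j x = qq i x" using agree by metis
      have c1i: "h \<in> adm i \<Longrightarrow> h \<notin> Levels (qq i) \<Longrightarrow> h \<in> adm j" using adm_transfer_strict[OF qi qj _ _ agS] by blast
      have c1j: "h \<in> adm j \<Longrightarrow> h \<notin> Levels (qq j) \<Longrightarrow> h \<in> adm i" using adm_transfer_strict[OF qj qi _ _ agS'] by blast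
      have c2i: "h \<in> adm i \<Longrightarrow> h \<notin> Levels (qq i) \<Longrightarrow> of_int n * h \<in> \<int>" using adm_int_strict[OF qi] P by blast
      have c3i: "h \<in> Levels (qq j)" if Li: "h \<in> Levels (qq i)" and Aj: "h \<in> adm j"
      proof (rule ccontr)
        assume nLj: "h \<notin> Levels (qq j)"
        obtain n0 where n0: "\<forall>x>h. qq i x = 0 \<or> of_int n0 * x \<in> \<int>" "of_int n0 * h \<notin> \<int>"
          using Li unfolding levels_char[OF qi hp] by blast
        have "of_int n0 * h \<in> \<int>"
        proof (rule adm_int_strict[OF qj Aj nLj])
          fix x assume "x > h" "qq j x \<noteq> 0"
          then show "of_int n0 * x \<in> \<int>" using n0(1) agree by metis
        qed
        then show False using n0(2) by simp
      qed
      have c3j: "h \<in> Levels (qq i)" if Lj: "h \<in> Levels (qq j)" and Ai: "h \<in> adm i"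
      proof (rule ccontr)
        assume nLi: "h \<notin> Levels (qq i)"
        obtain n0 where n0: "\<forall>x>h. qq j x = 0 \<or> of_int n0 * x \<in> \<int>" "of_int n0 * h \<notin> \<int>"
          using Lj unfolding levels_char[OF qj hp] by blast
        have "of_int n0 * h \<in> \<int>"
        proof (rule adm_int_strict[OF qi Ai nLi])
          fix x assume "x > h" "qq i x \<noteq> 0"
          then show "of_int n0 * x \<in> \<int>" using n0(1) agree by metis
        qed
        then show False using n0(2) by simp
      qed
      have sAi: "qq i h \<noteq> 0 \<Longrightarrow> h \<in> adm i" using supp_adm[OF qi] .
      have sAj: "qq j h \<noteq> 0 \<Longrightarrow> h \<in> adm j" using supp_adm[OF qj] .
      show ?thesis
      proof (cases "h \<in> adm j")
        case nAj: False
        have "qq j h = 0" using sAj nAj by blast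
        then have "qq i h \<noteq> 0" using nz by simp
        then have Ai: "h \<in> adm i" using sAi by blast
        have Li: "h \<in> Levels (qq i)" using c1i Ai nAj by blast
        have Cnz: "c (node_of h i) \<noteq> 0" using R_mand[OF c node_in_A_flat[OF i Ai hK]] mand_iff[OF i hp] Li by blast
        show ?thesis unfolding sigma_pow_apply qai qaj using Ai nAj Cnz by simp
      next
        case Aj: True
        show ?thesis
        proof (cases "h \<in> adm i")
          case nAi: False
          have "qq i h = 0" using sAi nAi by blast
          have Lj: "h \<in> Levels (qq j)" using c1j Aj nAi by blast
          have Cnz: "c (node_of h j) \<noteq> 0" using R_mand[OF c node_in_A_flat[OF j Aj hK]] mand_iff[OF j hp] Lj by blast
          show ?thesis unfolding sigma_pow_apply qai qaj using Aj nAi Cnz by simp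
        next
          case Ai: True
          obtain h' where h': "h' \<in> AQ Q" "h < h'" "\<forall>k''\<in>AQ Q. \<not> (h < k'' \<and> k'' < h')" using next_AQ[OF hAQ] by blast
          have trh': "trunc h' (qq i) = trunc h' (qq j)" using tr h'(2) by blast
          have pj: "node_of h' j = node_of h' i" unfolding node_of_def using trh' by simp
          have pari: "is_parent Q (node_of h i) (node_of h' i)" by (rule parent_of[OF i hAQ h'])
          have parj: "is_parent Q (node_of h j) (node_of h' i)" using parent_of[OF j hAQ h'] pj by simp
          have ui: "node_of h i \<in> A_flat Q" using node_in_A_flat[OF i Ai hK] .
          have wj: "node_of h j \<in> A_flat Q" using node_in_A_flat[OF j Aj hK] .
          show ?thesis
          proof (cases "h \<in> Levels (qq i)")
            case Li: True
            have Lj: "h \<in> Levels (qq j)" using c3i Li Aj by blast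
            have mi: "mandatory_node Q (node_of h i)" using mand_iff[OF i hp] Li by simp
            have mj: "mandatory_node Q (node_of h j)" using mand_iff[OF j hp] Lj by simp
            define N where "N = node_N Q (node_of h' i)"
            have pw: "c (node_of h i) ^ N \<noteq> c (node_of h j) ^ N"
              unfolding N_def by (rule R_mand2[OF c ui wj nodene mi mj pari parj])
            have Nh: "N = nat (lcm (int (ram (trunc h' (qq i)))) (denom h) div int (ram (trunc h' (qq i))))"
              unfolding N_def node_N_def node_of_def node_Ram_eq children_height_eq[OF hAQ h'(2,3)] ..
            have Rpos: "int (ram (trunc h' (qq i))) > 0" using ram_ge1[OF is_expfac_trunc[OF qi, where e=h']] by simp
            have Rdvd: "int (ram (trunc h' (qq i))) dvd n"
            proof (rule ram_dvd[OF is_expfac_trunc[OF qi]])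
              fix x assume "trunc h' (qq i) x \<noteq> 0"
              then have "x \<ge> h'" "qq i x \<noteq> 0" by (auto simp: trunc_def split: if_splits)
              then show "of_int n * x \<in> \<int>" using P h'(2) by simp
            qed
            have NI: "of_nat N * (of_int n * h) \<in> \<int>" unfolding Nh by (rule NUM1[OF Rpos Rdvd])
            show ?thesis
            proof
              assume eq: "sigma_pow k (qa a i) h = sigma_pow l (qa a j) h"
              have "c (node_of h i) * zeta (of_int n * h) * zeta (of_int l * h) = c (node_of h j) * zeta (of_int l * h)"
                using eq unfolding sigma_pow_apply qai qaj zk using Ai Aj by (simp add: algebra_simps)
              then have e1: "c (node_of h i) * zeta (of_int n * h) = c (node_of h j)" by simp
              have "c (node_of h j) ^ N = c (node_of h i) ^ N * zeta (of_nat N * (of_int n * h))"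
                unfolding e1[symmetric] by (simp add: power_mult_distrib zeta_power)
              also have "\<dots> = c (node_of h i) ^ N" using NI by simp
              finally show False using pw by simp
            qed
          next
            case nLi: False
            have nLj: "h \<notin> Levels (qq j)" using c3j nLi Ai by blast
            have mi: "\<not> mandatory_node Q (node_of h i)" using mand_iff[OF i hp] nLi by simp
            have mj: "\<not> mandatory_node Q (node_of h j)" using mand_iff[OF j hp] nLj by simp
            have ne: "c (node_of h i) \<noteq> c (node_of h j)" by (rule R_nonmand[OF c ui wj nodene mi mj pari parj])
            have "of_int n * h \<in> \<int>" using c2i Ai nLi by blast
            then have "zeta (of_int n * h) = 1" by simp
            then show ?thesis unfolding sigma_pow_apply qai qaj zk using Ai Aj ne by simp
          qed
        qed
      qed
    qed
  qed
  show ?thesis unfolding a_def[symmetric] h_def[symmetric]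
    using h0 Above AtH slope_diff_iff[of "sigma_pow k (qa a i)" "sigma_pow l (qa a j)" h] qa_exp[OF i] qa_exp[OF j] by simp
qed

lemma cfg_D: assumes "a \<in> config_space Q" shows "(\<forall>x. x \<notin> cfg_index Q \<longrightarrow> a x = 0) \<and> pit_sim (Q_of Q a) Q"
  using assms unfolding config_space_def mem_Collect_eq .

lemma qa_snd: "snd (Q_of Q a ! i) = qa a i" unfolding qa_def ..

lemma A_in_config:
  assumes c: "c \<in> R_space Q"
  shows "coeff_map Q c \<in> config_space Q"
  unfolding config_space_def mem_Collect_eq
proof (intro conjI allI impI)
  fix x assume "x \<notin> cfg_index Q"
  then show "coeff_map Q c x = 0" unfolding coeff_map_def by (cases x) simp
next
  show "pit_sim (Q_of Q (coeff_map Q c)) Q"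
    unfolding pit_sim_def qa_snd using A_main[OF c] fst_Qof by simp
qed

lemma sim_nat:
  assumes a: "a \<in> config_space Q" and i: "i < length Q" and j: "j < length Q"
    and k: "k \<le> ram (qq i)" and l: "l \<le> ram (qq j)"
  shows "slope (diff_ef (sigma_pow (int k) (qa a i)) (sigma_pow (int l) (qa a j)))
       = slope (diff_ef (sigma_pow (int k) (qq i)) (sigma_pow (int l) (qq j)))"
proof -
  have "pit_sim (Q_of Q a) Q" using cfg_D[OF a] by blast
  then have H: "\<forall>i < length Q. \<forall>j < length Q. \<forall>k l :: nat.
        k \<le> ram (qq i) \<longrightarrow> l \<le> ram (qq j) \<longrightarrow>
        slope (diff_ef (sigma_pow (int k) (qa a i)) (sigma_pow (int l) (qa a j)))
        = slope (diff_ef (sigma_pow (int k) (qq i)) (sigma_pow (int l) (qq j)))"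
    unfolding pit_sim_def qa_snd by (elim conjE)
  have H1: "\<forall>j < length Q. \<forall>k l :: nat.
        k \<le> ram (qq i) \<longrightarrow> l \<le> ram (qq j) \<longrightarrow>
        slope (diff_ef (sigma_pow (int k) (qa a i)) (sigma_pow (int l) (qa a j)))
        = slope (diff_ef (sigma_pow (int k) (qq i)) (sigma_pow (int l) (qq j)))" using H i by blast
  have H2: "\<forall>k l :: nat.
        k \<le> ram (qq i) \<longrightarrow> l \<le> ram (qq j) \<longrightarrow>
        slope (diff_ef (sigma_pow (int k) (qa a i)) (sigma_pow (int l) (qa a j)))
        = slope (diff_ef (sigma_pow (int k) (qq i)) (sigma_pow (int l) (qq j)))" using H1 j by blast
  show ?thesis using H2 k l by blast
qed

lemma B1:
  assumes a: "a \<in> config_space Q" and i: "i < length Q" and ne: "qa a i e \<noteq> 0"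
  shows "e \<in> adm i"
proof (rule ccontr)
  assume nae: "e \<notin> adm i"
  have qi: "is_expfac (qq i)" using qq_exp[OF i] .
  have fi: "is_expfac (qa a i)" using qa_exp[OF i] .
  define S where "S = {x. qa a i x \<noteq> 0 \<and> x \<notin> adm i}"
  have finS: "finite S" unfolding S_def using is_expfac_finite[OF fi] by (rule rev_finite_subset) auto
  have eS: "e \<in> S" unfolding S_def using ne nae by simp
  define e0 where "e0 = Max S"
  have e0S: "e0 \<in> S" unfolding e0_def using finS eS by (metis Max_in empty_iff)
  have e0max: "\<And>x. x \<in> S \<Longrightarrow> x \<le> e0" unfolding e0_def using finS by simp
  have qe0: "qa a i e0 \<noteq> 0" and nae0: "e0 \<notin> adm i" using e0S unfolding S_def by auto
  have e0p: "e0 > 0" using is_expfacD[OF fi qe0] .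
  define t where "t = level_ram (Levels (qq i)) e0"
  have L: "slope (diff_ef (qa a i) (sigma_pow t (qa a i))) = e0" unfolding t_def
  proof (rule key_T[OF qi fi e0p qe0 nae0])
    fix x assume "x > e0" "qa a i x \<noteq> 0"
    then show "x \<in> adm i" using e0max unfolding S_def by force
  qed
  have tpos: "t > 0" unfolding t_def using level_ram_pos[OF finite_Levels[OF qi]] .
  have tdvd: "t dvd int (ram (qq i))" unfolding t_def by (rule level_ram_dvd_ram[OF qi])
  have "t \<le> int (ram (qq i))" using tdvd ram_ge1[OF qi] by (simp add: zdvd_imp_le)
  then have tle: "nat t \<le> ram (qq i)" by simp
  have tt: "int (nat t) = t" using tpos by simp
  have "slope (diff_ef (sigma_pow t (qa a i)) (qa a i)) = slope (diff_ef (sigma_pow t (qq i)) (qq i))"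
    using sim_nat[OF a i i tle, of 0] tt by simp
  moreover have "slope (diff_ef (sigma_pow t (qa a i)) (qa a i)) = e0"
    using L slope_diff_sym[OF fi, of "sigma_pow t (qa a i)"] fi by simp
  moreover have "slope (diff_ef (sigma_pow t (qq i)) (qq i)) \<noteq> e0"
  proof
    assume "slope (diff_ef (sigma_pow t (qq i)) (qq i)) = e0"
    then have "sigma_pow t (qq i) e0 \<noteq> qq i e0" using slope_diff_iff[of "sigma_pow t (qq i)" "qq i" e0] qi e0p by simp
    then have "qq i e0 \<noteq> 0" by (auto simp: sigma_pow_apply)
    then show False using supp_adm[OF qi] nae0 by blast
  qed
  ultimately show False by simp
qed

lemma SIM_ALL:
  assumes a: "a \<in> config_space Q" and i: "i < length Q" and j: "j < length Q"
  shows "slope (diff_ef (sigma_pow k (qa a i)) (sigma_pow l (qa a j)))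
       = slope (diff_ef (sigma_pow k (qq i)) (sigma_pow l (qq j)))"
proof -
  define Ri where "Ri = int (ram (qq i))"
  define Rj where "Rj = int (ram (qq j))"
  have Rip: "Ri > 0" unfolding Ri_def using ram_ge1[OF qq_exp[OF i]] by simp
  have Rjp: "Rj > 0" unfolding Rj_def using ram_ge1[OF qq_exp[OF j]] by simp
  have m1: "\<And>x. qa a i x \<noteq> 0 \<Longrightarrow> of_int Ri * x \<in> \<int>"
    unfolding Ri_def using B1[OF a i] ram_mult_adm[OF qq_exp[OF i]] by simp
  have m2: "\<And>x. qq i x \<noteq> 0 \<Longrightarrow> of_int Ri * x \<in> \<int>"
    unfolding Ri_def using ram_Ints[OF qq_exp[OF i]] by simp
  have m3: "\<And>x. qa a j x \<noteq> 0 \<Longrightarrow> of_int Rj * x \<in> \<int>"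
    unfolding Rj_def using B1[OF a j] ram_mult_adm[OF qq_exp[OF j]] by simp
  have m4: "\<And>x. qq j x \<noteq> 0 \<Longrightarrow> of_int Rj * x \<in> \<int>"
    unfolding Rj_def using ram_Ints[OF qq_exp[OF j]] by simp
  have kk: "int (nat (k mod Ri)) = k mod Ri" using Rip by simp
  have ll: "int (nat (l mod Rj)) = l mod Rj" using Rjp by simp
  have "k mod Ri < Ri" using Rip by simp
  then have kle: "nat (k mod Ri) \<le> ram (qq i)" unfolding Ri_def by linarith
  have "l mod Rj < Rj" using Rjp by simp
  then have lle: "nat (l mod Rj) \<le> ram (qq j)" unfolding Rj_def by linarith
  have e1: "sigma_pow k (qa a i) = sigma_pow (k mod Ri) (qa a i)" by (rule sigma_mod[OF Rip m1])
  have e2: "sigma_pow k (qq i) = sigma_pow (k mod Ri) (qq i)" by (rule sigma_mod[OF Rip m2])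
  have e3: "sigma_pow l (qa a j) = sigma_pow (l mod Rj) (qa a j)" by (rule sigma_mod[OF Rjp m3])
  have e4: "sigma_pow l (qq j) = sigma_pow (l mod Rj) (qq j)" by (rule sigma_mod[OF Rjp m4])
  show ?thesis
    using sim_nat[OF a i j kle lle] by (simp only: kk ll e1 e2 e3 e4)
qed

lemma B2:
  assumes a: "a \<in> config_space Q" and i: "i < length Q" and j: "j < length Q" and e: "e > 0"
    and tr: "trunc e (qq i) = trunc e (qq j)"
  shows "qa a i e = qa a j e"
proof (rule ccontr)
  assume ne: "qa a i e \<noteq> qa a j e"
  define h where "h = slope (diff_ef (qq i) (qq j))"
  have "slope (diff_ef (qa a i) (qa a j)) = h" unfolding h_def using SIM_ALL[OF a i j, of 0 0] by simp
  then have "0 \<le> h \<and> (\<forall>x>h. qa a i x = qa a j x) \<and> (0 < h \<longrightarrow> qa a i h \<noteq> qa a j h)"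
    by (subst (asm) slope_diff_iff[OF qa_exp[OF i] qa_exp[OF j]])
  then have H: "\<forall>x>h. qa a i x = qa a j x" by (elim conjE)
  have eh: "e \<le> h"
  proof (rule ccontr)
    assume "\<not> e \<le> h"
    then have "e > h" by simp
    then show False using H ne by simp
  qed
  have "0 \<le> h \<and> (\<forall>x>h. qq i x = qq j x) \<and> (0 < h \<longrightarrow> qq i h \<noteq> qq j h)"
    using slope_diff_iff[OF qq_exp[OF i] qq_exp[OF j], of h] h_def by simp
  then have "qq i h \<noteq> qq j h" using eh e by simp
  moreover have "qq i h = qq j h" using tr eh by (simp add: trunc_eq_iff)
  ultimately show False by simp
qed

lemma ROOT:
  fixes R :: int and h :: rat and w :: complex
  assumes R: "R > 0" and w: "w ^ nat (lcm R (denom h) div R) = 1"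
  shows "\<exists>m0::int. zeta (of_int (m0 * R) * h) = w"
proof -
  define b where "b = denom h"
  define L where "L = lcm R b"
  have bpos: "b > 0" unfolding b_def by (rule denom_pos)
  have L0: "L \<noteq> 0" unfolding L_def using R bpos by simp
  have L0': "L \<ge> 0" unfolding L_def by simp
  have Lpos: "L > 0" using L0 L0' by simp
  have "R dvd L" unfolding L_def by simp
  then obtain N' where LN: "L = R * N'" by auto
  have N'pos: "N' > 0" using Lpos R LN by (simp add: zero_less_mult_iff)
  have Ld: "L div R = N'" using LN R by simp
  define N where "N = nat N'"
  have Npos: "N > 0" unfolding N_def using N'pos by simp
  have NN: "int N = N'" unfolding N_def using N'pos by simp
  have bL: "b dvd L" unfolding L_def by simp
  have Lh: "of_int L * h \<in> \<int>" using bL unfolding b_def by (simp add: int_mult_Ints_iff)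
  define f where "f = (\<lambda>m::nat. zeta (of_int (int m * R) * h))"
  have inj: "inj_on f {0..<N}"
  proof (rule inj_onI)
    fix m1 m2 assume m1: "m1 \<in> {0..<N}" and m2: "m2 \<in> {0..<N}" and fe: "f m1 = f m2"
    have "of_int (int m1 * R) * h - of_int (int m2 * R) * h \<in> \<int>" using fe unfolding f_def by (simp add: zeta_eq_iff)
    moreover have "of_int (int m1 * R) * h - of_int (int m2 * R) * h = of_int ((int m1 - int m2) * R) * h"
      by (simp add: algebra_simps)
    ultimately have "of_int ((int m1 - int m2) * R) * h \<in> \<int>" by simp
    then have "b dvd (int m1 - int m2) * R" unfolding b_def by (simp only: int_mult_Ints_iff)
    moreover have "R dvd (int m1 - int m2) * R" by simp
    ultimately have "L dvd (int m1 - int m2) * R" unfolding L_def by (rule lcm_least[rotated])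
    then have "N' * R dvd (int m1 - int m2) * R" unfolding LN by (simp add: mult.commute)
    then have dv: "N' dvd (int m1 - int m2)" using R by simp
    show "m1 = m2"
    proof (rule ccontr)
      assume "m1 \<noteq> m2"
      then have "int m1 - int m2 \<noteq> 0" by simp
      then have "\<bar>N'\<bar> \<le> \<bar>int m1 - int m2\<bar>" using dv by (rule dvd_imp_le_int)
      moreover have "\<bar>int m1 - int m2\<bar> < N'" using m1 m2 NN by auto
      ultimately show False using N'pos by simp
    qed
  qed
  have sub: "f ` {0..<N} \<subseteq> {z. z ^ N = 1}"
  proof
    fix z assume "z \<in> f ` {0..<N}"
    then obtain m where z: "z = f m" by auto
    have "z ^ N = zeta (of_nat N * (of_int (int m * R) * h))" unfolding z f_def by (rule zeta_power)
    also have "of_nat N * (of_int (int m * R) * h) = of_int (int m) * (of_int (int N * R) * h)"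
      by (simp add: algebra_simps)
    also have "int N * R = L" unfolding NN LN by simp
    also have "zeta (of_int (int m) * (of_int L * h)) = 1" using Lh by (simp add: Ints_mult)
    finally show "z \<in> {z. z ^ N = 1}" by simp
  qed
  have cardR: "card {z::complex. z ^ N = 1} = N" using card_roots_unity_eq Npos by blast
  then have finR: "finite {z::complex. z ^ N = 1}" using Npos by (intro card_ge_0_finite) simp
  have "card (f ` {0..<N}) = N" using card_image[OF inj] by simp
  then have "f ` {0..<N} = {z. z ^ N = 1}" using card_subset_eq[OF finR sub] cardR by simp
  moreover have "w \<in> {z. z ^ N = 1}" using w unfolding N_def L_def[symmetric] b_def[symmetric] Ld by simp
  ultimately obtain m where "w = f m" by auto
  then show ?thesis unfolding f_def by blast
qed

definition idx :: "node \<Rightarrow> nat \<times> nat" where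
  "idx v = (SOME ij. fst ij < length Q \<and> 1 \<le> snd ij \<and> snd ij \<le> ss \<and> fst v = of_nat (snd ij) / of_nat rr
      \<and> snd v = stokes_circle (trunc (fst v) (qq (fst ij))) \<and> fst v \<in> adm (fst ij))"

lemma idx_prop:
  assumes v: "v \<in> A_flat Q"
  shows "fst (idx v) < length Q \<and> 1 \<le> snd (idx v) \<and> snd (idx v) \<le> ss \<and> fst v = of_nat (snd (idx v)) / of_nat rr
      \<and> snd v = stokes_circle (trunc (fst v) (qq (fst (idx v)))) \<and> fst v \<in> adm (fst (idx v))"
proof -
  obtain i where i: "i < length Q" "snd v = stokes_circle (trunc (fst v) (qq i))" "fst v \<in> adm i"
    using v unfolding A_flat_def admissible_node_def by blast
  have K: "fst v \<le> KK" using v unfolding A_flat_def by simp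
  obtain j where j: "1 \<le> j" "j \<le> ss" "fst v = of_nat j / of_nat rr"
    using j_of[OF rr_mult_adm[OF i(1,3)] adm_pos[OF i(3)] K] by blast
  have "\<exists>ij. fst ij < length Q \<and> 1 \<le> snd ij \<and> snd ij \<le> ss \<and> fst v = of_nat (snd ij) / of_nat rr
      \<and> snd v = stokes_circle (trunc (fst v) (qq (fst ij))) \<and> fst v \<in> adm (fst ij)"
    using i j by (intro exI[of _ "(i, j)"]) simp
  then show ?thesis unfolding idx_def by (rule someI_ex)
qed

definition gmap :: "(nat \<times> nat \<Rightarrow> complex) \<Rightarrow> node \<Rightarrow> complex" where
  "gmap a = (\<lambda>v. if v \<in> A_flat Q then a (idx v) else 0)"

lemma g_node2:
  assumes a: "a \<in> config_space Q" and v: "v \<in> A_flat Q" and i: "i < length Q"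
    and sv: "snd v = stokes_circle (trunc (fst v) (qq i))"
  shows "gmap a v = qa a i (fst v)"
proof -
  obtain i0 j0 where ij: "idx v = (i0, j0)" by (cases "idx v")
  have P: "i0 < length Q" "1 \<le> j0" "j0 \<le> ss" "fst v = of_nat j0 / of_nat rr"
     "snd v = stokes_circle (trunc (fst v) (qq i0))" "fst v \<in> adm i0"
    using idx_prop[OF v] unfolding ij by auto
  have fp: "fst v > 0" using adm_pos[OF P(6)] .
  have "trunc (fst v) (qq i0) = trunc (fst v) (qq i)" using circ_trunc_eq[OF P(1) i fp] P(5) sv by simp
  then have e: "qa a i0 (fst v) = qa a i (fst v)" by (rule B2[OF a P(1) i fp])
  have "gmap a v = a (i0, j0)" unfolding gmap_def using v ij by simp
  also have "\<dots> = qa a i0 (fst v)" unfolding P(4) by (rule qa_at[OF P(1-3), symmetric])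
  finally show ?thesis using e by simp
qed

lemma coeff_g:
  assumes a: "a \<in> config_space Q"
  shows "coeff_map Q (gmap a) = a"
proof (rule ext)
  fix x
  obtain i j :: nat where x: "x = (i, j)" by (cases x)
  show "coeff_map Q (gmap a) x = a x"
  proof (cases "(i, j) \<in> cfg_index Q")
    case False
    then show ?thesis unfolding x coeff_map_def using cfg_D[OF a] by simp
  next
    case True
    then have i: "i < length Q" and j: "1 \<le> j" "j \<le> ss" unfolding cfg_index_def by auto
    define e where "e = (of_nat j / of_nat rr :: rat)"
    have aij: "a (i, j) = qa a i e" unfolding e_def by (rule qa_at[OF i j, symmetric])
    show ?thesis
    proof (cases "e \<in> adm i")
      case True
      have eK: "e \<le> KK" unfolding e_def by (rule j_le_K[OF j])
      have v: "node_of e i \<in> A_flat Q" by (rule node_in_A_flat[OF i True eK])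
      have "coeff_map Q (gmap a) x = gmap a (node_of e i)"
        unfolding x coeff_map_def node_of_def e_def using True \<open>(i, j) \<in> cfg_index Q\<close> e_def by simp
      also have "\<dots> = qa a i e" using g_node2[OF a v i] unfolding node_of_def by simp
      finally show ?thesis unfolding x aij .
    next
      case False
      have "qa a i e = 0" using B1[OF a i] False by blast
      then show ?thesis unfolding x coeff_map_def using False aij e_def by simp
    qed
  qed
qed

lemma g_mand_nz:
  assumes a: "a \<in> config_space Q" and v: "v \<in> A_flat Q" and m: "mandatory_node Q v"
  shows "gmap a v \<noteq> 0"
proof -
  obtain i1 where i1: "i1 < length Q" "snd v = stokes_circle (trunc (fst v) (qq i1))" "fst v \<in> Levels (qq i1)"
    using m unfolding mandatory_node_def by blast
  define h where "h = fst v"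
  have hp: "h > 0" unfolding h_def using levels_pos[OF qq_exp[OF i1(1)] i1(3)] .
  have g: "gmap a v = qa a i1 h" unfolding h_def by (rule g_node2[OF a v i1(1,2)])
  have "fst v \<in> {slope (diff_ef (qq i1) (sigma_pow i (qq i1))) |i. True}" using i1(3) unfolding Levels_def by (rule DiffD1)
  then obtain n where n0: "fst v = slope (diff_ef (qq i1) (sigma_pow n (qq i1)))" by blast
  then have n: "slope (diff_ef (qq i1) (sigma_pow n (qq i1))) = h" unfolding h_def by simp
  have "slope (diff_ef (qa a i1) (sigma_pow n (qa a i1))) = h"
    using SIM_ALL[OF a i1(1) i1(1), of 0 n] n by simp
  then have "qa a i1 h \<noteq> sigma_pow n (qa a i1) h"
    using slope_diff_iff[of "qa a i1" "sigma_pow n (qa a i1)" h] qa_exp[OF i1(1), of a] hp by simp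
  then have "qa a i1 h \<noteq> 0" by (auto simp: sigma_pow_apply)
  then show ?thesis using g by simp
qed

lemma sib:
  assumes uw: "u \<noteq> w" and pu: "is_parent Q u p" and pw: "is_parent Q w p"
  obtains i1 j1 h h' where "i1 < length Q" "j1 < length Q" "u = node_of h i1" "w = node_of h j1" "p = node_of h' i1"
    "h \<in> AQ Q" "h' \<in> AQ Q" "h < h'" "\<forall>k''\<in>AQ Q. \<not> (h < k'' \<and> k'' < h')"
    "trunc h' (qq i1) = trunc h' (qq j1)" "trunc h (qq i1) \<noteq> trunc h (qq j1)"
proof -
  obtain i k k' where i: "i < length Q" "k \<in> AQ Q" "k' \<in> AQ Q" "k < k'" "\<forall>k''\<in>AQ Q. \<not> (k < k'' \<and> k'' < k')"
    "u = (k, stokes_circle (trunc k (qq i)))" "p = (k', stokes_circle (trunc k' (qq i)))"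
    using pu unfolding is_parent_def by blast
  obtain j k2 k2' where j: "j < length Q" "k2 \<in> AQ Q" "k2' \<in> AQ Q" "k2 < k2'" "\<forall>k''\<in>AQ Q. \<not> (k2 < k'' \<and> k'' < k2')"
    "w = (k2, stokes_circle (trunc k2 (qq j)))" "p = (k2', stokes_circle (trunc k2' (qq j)))"
    using pw unfolding is_parent_def by blast
  have kk': "k2' = k'" using i(7) j(7) by simp
  have kp: "k' > 0" using AQ_rr[OF i(3)] by simp
  have c: "stokes_circle (trunc k' (qq i)) = stokes_circle (trunc k' (qq j))" using i(7) j(7) kk' by simp
  then have trk': "trunc k' (qq i) = trunc k' (qq j)" using circ_trunc_eq[OF i(1) j(1) kp] by simp
  have kk: "k2 = k"
  proof (rule ccontr)
    assume "k2 \<noteq> k"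
    then have "k < k2 \<or> k2 < k" by auto
    then show False
    proof
      assume "k < k2" then show False using i(5) j(2,4) kk' by auto
    next
      assume "k2 < k" then show False using j(5) i(2,4) kk' by auto
    qed
  qed
  have kp0: "k > 0" using AQ_rr[OF i(2)] by simp
  have "stokes_circle (trunc k (qq i)) \<noteq> stokes_circle (trunc k (qq j))" using uw i(6) j(6) kk by auto
  then have trk: "trunc k (qq i) \<noteq> trunc k (qq j)" by auto
  show ?thesis
  proof (rule that[OF i(1) j(1) _ _ _ i(2) i(3) i(4) i(5) trk' trk])
    show "u = node_of k i" unfolding node_of_def using i(6) .
    show "w = node_of k j" unfolding node_of_def using j(6) kk by simp
    show "p = node_of k' i" unfolding node_of_def using i(7) .
  qed
qed

lemma sib_agree:
  assumes i: "i < length Q" and j: "j < length Q" and h: "h \<in> AQ Q" "h < h'" "\<forall>k''\<in>AQ Q. \<not> (h < k'' \<and> k'' < h')"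
    and tr: "trunc h' (qq i) = trunc h' (qq j)" and x: "x > h"
  shows "qq i x = qq j x"
proof (cases "x \<ge> h'")
  case True then show ?thesis using tr by (simp add: trunc_eq_iff)
next
  case False
  show ?thesis
  proof (rule ccontr)
    assume ne: "qq i x \<noteq> qq j x"
    then have "qq i x \<noteq> 0 \<or> qq j x \<noteq> 0" by auto
    then have "x \<in> AQ Q" using supp_AQ[OF i] supp_AQ[OF j] by blast
    then show False using h(3) x False by auto
  qed
qed

lemma sib_slope:
  assumes i: "i < length Q" and j: "j < length Q" and h: "h \<in> AQ Q" "h < h'" "\<forall>k''\<in>AQ Q. \<not> (h < k'' \<and> k'' < h')"
    and tr: "trunc h' (qq i) = trunc h' (qq j)" and ntr: "trunc h (qq i) \<noteq> trunc h (qq j)"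
  shows "slope (diff_ef (qq i) (qq j)) = h"
proof -
  have ag: "\<forall>x>h. qq i x = qq j x" using sib_agree[OF i j h tr] by blast
  have hp: "h > 0" using AQ_rr[OF h(1)] by simp
  have "qq i h \<noteq> qq j h"
  proof
    assume "qq i h = qq j h"
    then have "\<forall>x\<ge>h. qq i x = qq j x" using ag by (metis order_le_less)
    then show False using ntr by (simp add: trunc_eq_iff)
  qed
  then show ?thesis using slope_diff_iff[OF qq_exp[OF i] qq_exp[OF j], of h] ag hp by simp
qed

lemma g_in_R:
  assumes a: "a \<in> config_space Q"
  shows "gmap a \<in> R_space Q"
  unfolding R_space_def mem_Collect_eq
proof (intro conjI ballI allI impI)
  fix v assume "v \<notin> A_flat Q" then show "gmap a v = 0" unfolding gmap_def by simp
next
  fix v assume "v \<in> A_flat Q" "mandatory_node Q v" then show "gmap a v \<noteq> 0" by (rule g_mand_nz[OF a])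
next
  fix u w p assume u: "u \<in> A_flat Q" and w: "w \<in> A_flat Q"
    and H: "u \<noteq> w \<and> \<not> mandatory_node Q u \<and> \<not> mandatory_node Q w \<and> is_parent Q u p \<and> is_parent Q w p"
  obtain i1 j1 h h' where S: "i1 < length Q" "j1 < length Q" "u = node_of h i1" "w = node_of h j1" "p = node_of h' i1"
    "h \<in> AQ Q" "h' \<in> AQ Q" "h < h'" "\<forall>k''\<in>AQ Q. \<not> (h < k'' \<and> k'' < h')"
    "trunc h' (qq i1) = trunc h' (qq j1)" "trunc h (qq i1) \<noteq> trunc h (qq j1)"
    using sib[of u w p] H by blast
  have hp: "h > 0" using AQ_rr[OF S(6)] by simp
  have gu: "gmap a u = qa a i1 h" using g_node2[OF a u S(1)] S(3) unfolding node_of_def by simp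
  have gw: "gmap a w = qa a j1 h" using g_node2[OF a w S(2)] S(4) unfolding node_of_def by simp
  have "slope (diff_ef (qa a i1) (qa a j1)) = h"
    using SIM_ALL[OF a S(1) S(2), of 0 0] sib_slope[OF S(1) S(2) S(6) S(8) S(9) S(10) S(11)] by simp
  then have "qa a i1 h \<noteq> qa a j1 h" using slope_diff_iff[of "qa a i1" "qa a j1" h] qa_exp[OF S(1), of a] qa_exp[OF S(2), of a] hp by simp
  then show "gmap a u \<noteq> gmap a w" using gu gw by simp
next
  fix u w p assume u: "u \<in> A_flat Q" and w: "w \<in> A_flat Q"
    and H: "u \<noteq> w \<and> mandatory_node Q u \<and> mandatory_node Q w \<and> is_parent Q u p \<and> is_parent Q w p"
  obtain i1 j1 h h' where S: "i1 < length Q" "j1 < length Q" "u = node_of h i1" "w = node_of h j1" "p = node_of h' i1"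
    "h \<in> AQ Q" "h' \<in> AQ Q" "h < h'" "\<forall>k''\<in>AQ Q. \<not> (h < k'' \<and> k'' < h')"
    "trunc h' (qq i1) = trunc h' (qq j1)" "trunc h (qq i1) \<noteq> trunc h (qq j1)"
    using sib[of u w p] H by blast
  have qi: "is_expfac (qq i1)" using qq_exp[OF S(1)] .
  have qj: "is_expfac (qq j1)" using qq_exp[OF S(2)] .
  have hp: "h > 0" using AQ_rr[OF S(6)] by simp
  have gu: "gmap a u = qa a i1 h" using g_node2[OF a u S(1)] S(3) unfolding node_of_def by simp
  have gw: "gmap a w = qa a j1 h" using g_node2[OF a w S(2)] S(4) unfolding node_of_def by simp
  have gwnz: "qa a j1 h \<noteq> 0" using g_mand_nz[OF a w] H gw by simp
  define R where "R = int (ram (trunc h' (qq i1)))"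
  have Rpos: "R > 0" unfolding R_def using ram_ge1[OF is_expfac_trunc[OF qi, where e=h']] by simp
  have Nh: "node_N Q p = nat (lcm R (denom h) div R)"
    unfolding S(5) node_N_def node_of_def node_Ram_eq children_height_eq[OF S(6) S(8) S(9)] R_def ..
  have ag: "\<And>x. x > h \<Longrightarrow> qq i1 x = qq j1 x" using sib_agree[OF S(1) S(2) S(6) S(8) S(9) S(10)] .
  show "gmap a u ^ node_N Q p \<noteq> gmap a w ^ node_N Q p"
  proof
    assume eqN: "gmap a u ^ node_N Q p = gmap a w ^ node_N Q p"
    define w0 where "w0 = qa a i1 h / qa a j1 h"
    have "w0 ^ nat (lcm R (denom h) div R) = 1"
      unfolding w0_def power_divide using eqN gu gw Nh gwnz by simp
    then obtain m0 where m0: "zeta (of_int (m0 * R) * h) = w0" using ROOT[OF Rpos] by blast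
    define l where "l = m0 * R"
    have fix_above: "\<And>x. x > h \<Longrightarrow> sigma_pow l (qq j1) x = qq i1 x"
    proof -
      fix x assume x: "x > h"
      show "sigma_pow l (qq j1) x = qq i1 x"
      proof (cases "qq j1 x = 0")
        case True then show ?thesis using ag[OF x] by (simp add: sigma_pow_apply)
      next
        case False
        have "x \<in> AQ Q" using supp_AQ[OF S(2) False] .
        then have xh': "x \<ge> h'" using S(9) x by (meson not_le)
        then have "trunc h' (qq i1) x \<noteq> 0" using False ag[OF x] by (simp add: trunc_def)
        then have "of_nat (ram (trunc h' (qq i1))) * x \<in> \<int>" by (rule ram_Ints[OF is_expfac_trunc[OF qi]])
        then have "of_int R * x \<in> \<int>" unfolding R_def by simp
        then have "of_int l * x \<in> \<int>" unfolding l_def by (simp add: Ints_mult mult.assoc)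
        then show ?thesis using ag[OF x] by (simp add: sigma_pow_apply)
      qed
    qed
    have athq: "qq i1 h \<noteq> sigma_pow l (qq j1) h"
    proof
      assume eh: "qq i1 h = sigma_pow l (qq j1) h"
      have "trunc h (qq i1) = sigma_pow l (trunc h (qq j1))"
      proof (rule ext)
        fix x show "trunc h (qq i1) x = sigma_pow l (trunc h (qq j1)) x"
        proof (cases "x \<ge> h")
          case False then show ?thesis by (simp add: trunc_def sigma_pow_apply)
        next
          case True
          then have "x = h \<or> x > h" by auto
          then show ?thesis
          proof
            assume "x = h" then show ?thesis using eh by (simp add: trunc_def sigma_pow_apply)
          next
            assume "x > h" then show ?thesis using fix_above[of x] by (simp add: trunc_def sigma_pow_apply)
          qed
        qed
      qed
      then have "stokes_circle (trunc h (qq j1)) = stokes_circle (trunc h (qq i1))" using circle_eq_iff by blast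
      then have "trunc h (qq j1) = trunc h (qq i1)" using circ_trunc_eq[OF S(2) S(1) hp] by simp
      then show False using S(11) by simp
    qed
    have "slope (diff_ef (qq i1) (sigma_pow l (qq j1))) = h"
      using slope_diff_iff[of "qq i1" "sigma_pow l (qq j1)" h] qi qj hp fix_above athq by simp
    then have sl: "slope (diff_ef (qa a i1) (sigma_pow l (qa a j1))) = h"
      using SIM_ALL[OF a S(1) S(2), of 0 l] by simp
    have "sigma_pow l (qa a j1) h = qa a j1 h * w0" using m0 unfolding l_def by (simp add: sigma_pow_apply)
    also have "\<dots> = qa a i1 h" unfolding w0_def using gwnz by simp
    finally have "qa a i1 h = sigma_pow l (qa a j1) h" by simp
    then show False using sl slope_diff_iff[of "qa a i1" "sigma_pow l (qa a j1)" h] qa_exp[OF S(1), of a] qa_exp[OF S(2), of a] hp by simp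
  qed
qed

lemma g_coeff:
  assumes c: "c \<in> R_space Q"
  shows "gmap (coeff_map Q c) = c"
proof (rule ext)
  fix v
  show "gmap (coeff_map Q c) v = c v"
  proof (cases "v \<in> A_flat Q")
    case False then show ?thesis unfolding gmap_def using R_zero[OF c False] by simp
  next
    case True
    obtain i0 j0 where ij: "idx v = (i0, j0)" by (cases "idx v")
    have P: "i0 < length Q" "1 \<le> j0" "j0 \<le> ss" "fst v = of_nat j0 / of_nat rr"
       "snd v = stokes_circle (trunc (fst v) (qq i0))" "fst v \<in> adm i0"
      using idx_prop[OF True] unfolding ij by auto
    have idx: "(i0, j0) \<in> cfg_index Q" unfolding cfg_index_def using P by simp
    have "gmap (coeff_map Q c) v = coeff_map Q c (i0, j0)" unfolding gmap_def using True ij by simp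
    also have "\<dots> = c (fst v, snd v)" unfolding coeff_map_def using idx P(4,5,6) by simp
    finally show ?thesis by simp
  qed
qed

lemma cont_coeff: "continuous_on (R_space Q) (coeff_map Q)"
proof (rule continuous_on_coordinatewise_then_product)
  fix x :: "nat \<times> nat"
  obtain i j where x: "x = (i, j)" by (cases x)
  show "continuous_on (R_space Q) (\<lambda>c. coeff_map Q c x)"
  proof (cases "(i, j) \<in> cfg_index Q \<and> of_nat j / of_nat rr \<in> adm i")
    case True
    have "(\<lambda>c. coeff_map Q c x) = (\<lambda>c. c (of_nat j / of_nat rr, stokes_circle (trunc (of_nat j / of_nat rr) (qq i))))"
      unfolding x coeff_map_def using True by simp
    then show ?thesis using continuous_on_subset[OF continuous_on_product_coordinates] by (metis subset_UNIV)
  next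
    case False
    have e: "(\<lambda>c. coeff_map Q c x) = (\<lambda>c. 0)" unfolding x coeff_map_def using False by auto
    show ?thesis unfolding e by (rule continuous_on_const)
  qed
qed

lemma cont_g: "continuous_on (config_space Q) gmap"
proof (rule continuous_on_coordinatewise_then_product)
  fix v :: node
  show "continuous_on (config_space Q) (\<lambda>a. gmap a v)"
  proof (cases "v \<in> A_flat Q")
    case True
    have "(\<lambda>a. gmap a v) = (\<lambda>a. a (idx v))" unfolding gmap_def using True by simp
    then show ?thesis using continuous_on_subset[OF continuous_on_product_coordinates] by (metis subset_UNIV)
  next
    case False
    have e: "(\<lambda>a. gmap a v) = (\<lambda>a. 0)" unfolding gmap_def using False by simp
    show ?thesis unfolding e by (rule continuous_on_const)
  qed
qed

lemma main: "\<exists>g. homeomorphism (R_space Q) (config_space Q) (coeff_map Q) g"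
proof (intro exI homeomorphismI)
  show "continuous_on (R_space Q) (coeff_map Q)" by (rule cont_coeff)
  show "continuous_on (config_space Q) gmap" by (rule cont_g)
  show "coeff_map Q ` R_space Q \<subseteq> config_space Q" using A_in_config by blast
  show "gmap ` config_space Q \<subseteq> R_space Q" using g_in_R by blast
  show "\<And>x. x \<in> R_space Q \<Longrightarrow> gmap (coeff_map Q x) = x" by (rule g_coeff)
  show "\<And>y. y \<in> config_space Q \<Longrightarrow> coeff_map Q (gmap y) = y" by (rule coeff_g)
qed

end

theorem mainTheorem11:
  fixes Q :: pit
  assumes "pointed_irregular_type Q"
    and "compatible Q"
  shows "\<exists>g. homeomorphism (R_space Q) (config_space Q) (coeff_map Q) g"
proof -
  interpret PQ Q using assms by (rule PQ.intro)
  show ?thesis by (rule main)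
qed


end
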